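(* Let $X$ and $Y$ be nontrivial real Hausdorff locally convex spaces, $A:X\to Y$ a continuous linear operator, $h\in\Gamma(Y)$, $x^{\ast}\in X^{\ast}$, and assume $f:=h\circ A+x^{\ast}$ belongs to $\Gamma(X)$ (i.e. $\operatorname{dom}h\cap\operatorname{Im}A\neq\emptyset$). Then: (a) $f_\infty=h_\infty\circ A+x^{\ast}$ and $\ker A\subset[f_\infty=x^{\ast}]$; (b) if $h_\infty\ge0$, then $x^{\ast}\in\partial f_\infty(0)=\overline{\operatorname{dom}f^{\ast}}$; the converse implication holds if, moreover, $\operatorname{Im}A=Y$; (c) if $[h_\infty\le0]=\{0\}$, then $\ker A=[f_\infty\le x^{\ast}]$ and $x^{\ast}\in\operatorname{qri}\overline{\operatorname{dom}f^{\ast}}$; conversely, if $\operatorname{Im}A=Y$ and $\ker A=[f_\infty\le x^{\ast}]$, then $[h_\infty\le0]=\{0\}$; (d) if $h$ is bounded from below, then $h_\infty\ge0$ and $x^{\ast}\in\operatorname{dom}f^{\ast}$; if $\operatorname{Im}A=Y$, then $\inf h=-f^{\ast}(x^{\ast})$, and so $h$ is bounded from below if and only if $x^{\ast}\in\operatorname{dom}f^{\ast}$; (e) if $\operatorname{Im}A=Y$, then $h$ attains its infimum on $Y$ if and only if $x^{\ast}\in\operatorname{Im}\partial f$.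
   Context: $X^{\ast}$ is the topological dual of $X$ with the weak$^{\ast}$ topology (closures in $X^{\ast}$ are weak$^{\ast}$ closures); $\langle x,x^{\ast}\rangle=x^{\ast}(x)$. $\Gamma(V)$: proper lower semicontinuous convex functions on $V$ with values in $\mathbb{R}\cup\{\pm\infty\}$. For $\varphi\in\Gamma(V)$: $\operatorname{dom}\varphi=\{\varphi<\infty\}$, $\varphi^{\ast}(v^{\ast})=\sup_v(\langle v,v^{\ast}\rangle-\varphi(v))$, $\partial\varphi(v)=\{v^{\ast}:\langle v'-v,v^{\ast}\rangle\le\varphi(v')-\varphi(v)\ \forall v'\}$ if $\varphi(v)\in\mathbb{R}$ (empty otherwise), $\operatorname{Im}\partial\varphi=\bigcup_v\partial\varphi(v)$, and recession function $\varphi_\infty(u)=\lim_{t\to\infty}(\varphi(v_0+tu)-\varphi(v_0))/t$ for any $v_0\in\operatorname{dom}\varphi$. $[f_\infty\le x^{\ast}]=\{u: f_\infty(u)\le\langle u,x^{\ast}\rangle\}$, $[f_\infty=x^{\ast}]$ similarly; $[h_\infty\le0]=\{y: h_\infty(y)\le0\}$. For convex $B\subset X^{\ast}$, $\operatorname{qri}B=\{b\in B:\overline{\mathbb{R}_+(B-b)}\text{ is a linear subspace}\}$. *)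

theory Defs
  imports "HOL-Analysis.Analysis"
begin

definition lcs :: "('a::{real_vector,t2_space}) itself \<Rightarrow> bool" where
  "lcs _ \<longleftrightarrow>
     continuous_on UNIV (\<lambda>p::'a \<times> 'a. fst p + snd p) \<and>
     continuous_on UNIV (\<lambda>p::real \<times> 'a. fst p *\<^sub>R snd p) \<and>
     (\<forall>U::'a set. open U \<and> 0 \<in> U \<longrightarrow> (\<exists>V. open V \<and> convex V \<and> 0 \<in> V \<and> V \<subseteq> U))"

definition nontrivial :: "('a::real_vector) itself \<Rightarrow> bool" where
  "nontrivial _ \<longleftrightarrow> (\<exists>x::'a. x \<noteq> 0)"

definition dual :: "('a::{real_vector,topological_space} \<Rightarrow> real) set" where
  "dual = {\<phi>. linear \<phi> \<and> continuous_on UNIV \<phi>}"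

text \<open>Weak-star closure in the dual (closure w.r.t. the weak-star topology on dual).\<close>
definition wclosure :: "('a::{real_vector,topological_space} \<Rightarrow> real) set \<Rightarrow> ('a \<Rightarrow> real) set" where
  "wclosure B = {\<phi> \<in> dual. \<forall>F e. finite F \<and> e > 0 \<longrightarrow>
      (\<exists>b\<in>B. \<forall>x\<in>F. \<bar>b x - \<phi> x\<bar> < e)}"

definition Gamma :: "(('a::{real_vector,topological_space}) \<Rightarrow> ereal) set" where
  "Gamma = {\<phi>. (\<forall>x. \<phi> x \<noteq> -\<infinity>) \<and> (\<exists>x. \<phi> x \<noteq> \<infinity>) \<and>
     (\<forall>c::ereal. closed {x. \<phi> x \<le> c}) \<and>
     (\<forall>x y. \<forall>t\<in>{0<..<1::real}.
        \<phi> ((1 - t) *\<^sub>R x + t *\<^sub>R y) \<le> ereal (1 - t) * \<phi> x + ereal t * \<phi> y)}"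

definition edom :: "('a \<Rightarrow> ereal) \<Rightarrow> 'a set" where
  "edom \<phi> = {v. \<phi> v < \<infinity>}"

definition conj :: "('a \<Rightarrow> ereal) \<Rightarrow> ('a \<Rightarrow> real) \<Rightarrow> ereal" where
  "conj \<phi> vs = (SUP v. ereal (vs v) - \<phi> v)"

definition conj_dom :: "('a::{real_vector,topological_space} \<Rightarrow> ereal) \<Rightarrow> ('a \<Rightarrow> real) set" where
  "conj_dom \<phi> = {vs \<in> dual. conj \<phi> vs < \<infinity>}"

definition subdiff :: "('a::{real_vector,topological_space} \<Rightarrow> ereal) \<Rightarrow> 'a \<Rightarrow> ('a \<Rightarrow> real) set" where
  "subdiff \<phi> v = (if \<phi> v \<noteq> \<infinity> \<and> \<phi> v \<noteq> -\<infinity>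
      then {vs \<in> dual. \<forall>v'. ereal (vs (v' - v)) \<le> \<phi> v' - \<phi> v} else {})"

definition Im_subdiff :: "('a::{real_vector,topological_space} \<Rightarrow> ereal) \<Rightarrow> ('a \<Rightarrow> real) set" where
  "Im_subdiff \<phi> = (\<Union>v. subdiff \<phi> v)"

text \<open>Recession function, computed from a base point in the domain
  (the paper notes the value does not depend on the choice).\<close>
definition recession :: "('a::real_vector \<Rightarrow> ereal) \<Rightarrow> 'a \<Rightarrow> ereal" where
  "recession \<phi> u = (let v0 = (SOME v0. v0 \<in> edom \<phi>) in
     Lim at_top (\<lambda>t::real. (\<phi> (v0 + t *\<^sub>R u) - \<phi> v0) / ereal t))"

definition lin_subspace :: "('a \<Rightarrow> real) set \<Rightarrow> bool" where
  "lin_subspace S \<longleftrightarrow> (\<lambda>x. 0) \<in> S \<and> (\<forall>a\<in>S. \<forall>b\<in>S. (\<lambda>x. a x + b x) \<in> S) \<and>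
     (\<forall>c::real. \<forall>a\<in>S. (\<lambda>x. c * a x) \<in> S)"

definition qri :: "('a::{real_vector,topological_space} \<Rightarrow> real) set \<Rightarrow> ('a \<Rightarrow> real) set" where
  "qri B = {b \<in> B. lin_subspace (wclosure {(\<lambda>x. t * (c x - b x)) | t c. t \<ge> 0 \<and> c \<in> B})}"

end

theory Submission
  imports Defs "HOL-Library.Function_Algebras"
begin


definition sublin :: "('v::real_vector \<Rightarrow> real) \<Rightarrow> bool" where
  "sublin p \<longleftrightarrow> (\<forall>x y. p (x+y) \<le> p x + p y) \<and> (\<forall>t x. t \<ge> 0 \<longrightarrow> p (t *\<^sub>R x) = t * p x)"

definition gok :: "('v::real_vector \<Rightarrow> real) \<Rightarrow> ('v \<times> real) set \<Rightarrow> bool" where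
  "gok p R \<longleftrightarrow> (\<forall>x a y b. (x,a)\<in>R \<longrightarrow> (y,b)\<in>R \<longrightarrow> (x+y,a+b)\<in>R) \<and>
     (\<forall>x a c. (x,a)\<in>R \<longrightarrow> (c *\<^sub>R x, c*a)\<in>R) \<and> (\<forall>x a. (x,a)\<in>R \<longrightarrow> a \<le> p x)"

lemma sublin_0: "sublin p \<Longrightarrow> p 0 = 0"
  unfolding sublin_def by (metis mult_zero_left order_refl scaleR_zero_left)

lemma gok_unique:
  assumes p: "sublin p" and R: "gok p R" and "(x,a)\<in>R" "(x,b)\<in>R"
  shows "a = b"
proof -
  have "(-1 *\<^sub>R x, -1 * b) \<in> R" using R assms(4) unfolding gok_def by blast
  then have "(x + -1 *\<^sub>R x, a + -1 * b) \<in> R" using R assms(3) unfolding gok_def by blast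
  then have z: "(0, a - b) \<in> R" by simp
  have "\<And>c. (c *\<^sub>R 0, c * (a - b)) \<in> R" using R z unfolding gok_def by blast
  then have "\<And>c. c * (a - b) \<le> p 0" using R unfolding gok_def by fastforce
  then have "\<And>c. c * (a - b) \<le> 0" using sublin_0[OF p] by simp
  from this[of 1] this[of "-1"] show ?thesis by simp
qed

lemma gok_zero: "gok p R \<Longrightarrow> (x,a) \<in> R \<Longrightarrow> (0,0) \<in> R"
  unfolding gok_def by (metis mult_zero_left scaleR_zero_left)

lemma gok_extend:
  assumes p: "sublin p" and R: "gok p R" and v: "\<forall>a. (v,a) \<notin> R" and ne: "R \<noteq> {}"
  shows "\<exists>R'. gok p R' \<and> R \<subseteq> R' \<and> R \<noteq> R'"
proof -
  have z: "(0,0) \<in> R" using ne gok_zero[OF R] by auto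
  have padd: "\<And>x y. p (x+y) \<le> p x + p y" and phom: "\<And>t x. t \<ge> 0 \<Longrightarrow> p (t *\<^sub>R x) = t * p x"
    using p unfolding sublin_def by auto
  have Radd: "\<And>x a y b. (x,a)\<in>R \<Longrightarrow> (y,b)\<in>R \<Longrightarrow> (x+y,a+b)\<in>R"
   and Rsc: "\<And>x a c. (x,a)\<in>R \<Longrightarrow> (c *\<^sub>R x, c*a)\<in>R"
   and Rle: "\<And>x a. (x,a)\<in>R \<Longrightarrow> a \<le> p x" using R unfolding gok_def by auto
  define S1 where "S1 = {b - p (y - v) | y b. (y,b) \<in> R}"
  have key: "b - p (y - v) \<le> p (x + v) - a" if "(x,a)\<in>R" "(y,b)\<in>R" for x a y b
  proof -
    have "a + b \<le> p (x + y)" using Rle[OF Radd[OF that]] .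
    also have "\<dots> \<le> p (x + v) + p (y - v)" using padd[of "x+v" "y - v"] by (simp add: algebra_simps)
    finally show ?thesis by simp
  qed
  define c where "c = Sup S1"
  have S1ne: "S1 \<noteq> {}" using z unfolding S1_def by blast
  have S1bdd: "bdd_above S1" unfolding S1_def bdd_above_def using key[OF z] by blast
  have c1: "b - p (y - v) \<le> c" if "(y,b)\<in>R" for y b
    unfolding c_def by (rule cSup_upper[OF _ S1bdd]) (use that S1_def in blast)
  have c2: "c \<le> p (x + v) - a" if "(x,a)\<in>R" for x a
    unfolding c_def by (rule cSup_least[OF S1ne]) (use that key S1_def in blast)
  define R' where "R' = {(x + t *\<^sub>R v, a + t * c) | x a t. (x,a) \<in> R}"
  have dom: "a + t * c \<le> p (x + t *\<^sub>R v)" if xa: "(x,a) \<in> R" for x a t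
  proof (cases "t > 0")
    case True
    have "(inverse t *\<^sub>R x, inverse t * a) \<in> R" using Rsc[OF xa] .
    from c2[OF this] have "c \<le> p (inverse t *\<^sub>R x + v) - inverse t * a" .
    then have "t * c \<le> t * (p (inverse t *\<^sub>R x + v) - inverse t * a)"
      using mult_left_mono True by fastforce
    moreover have "t * (inverse t * a) = a" using True by simp
    ultimately have "t * c \<le> t * p (inverse t *\<^sub>R x + v) - a" by (simp add: right_diff_distrib)
    also have "t * p (inverse t *\<^sub>R x + v) = p (x + t *\<^sub>R v)"
      using phom[of t "inverse t *\<^sub>R x + v"] True by (simp add: scaleR_add_right)
    finally show ?thesis by simp
  next
    case False
    show ?thesis
    proof (cases "t = 0")
      case True then show ?thesis using Rle[OF xa] by simp
    next
      case False
      define s where "s = - t"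
      have s: "s > 0" using False \<open>\<not> t > 0\<close> unfolding s_def by simp
      have "(inverse s *\<^sub>R x, inverse s * a) \<in> R" using Rsc[OF xa] .
      from c1[OF this] have "inverse s * a - p (inverse s *\<^sub>R x - v) \<le> c" .
      then have "s * (inverse s * a - p (inverse s *\<^sub>R x - v)) \<le> s * c"
        using mult_left_mono s by fastforce
      moreover have "s * (inverse s * a) = a" using s by simp
      ultimately have "a - s * p (inverse s *\<^sub>R x - v) \<le> s * c" by (simp add: right_diff_distrib)
      also have "s * p (inverse s *\<^sub>R x - v) = p (x - s *\<^sub>R v)"
        using phom[of s "inverse s *\<^sub>R x - v"] s by (simp add: scaleR_diff_right)
      finally show ?thesis unfolding s_def by (simp add: algebra_simps)
    qed
  qed
  have "gok p R'"
    unfolding gok_def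
  proof (intro conjI allI impI)
    fix x a y b assume "(x,a)\<in>R'" "(y,b)\<in>R'"
    then obtain x1 a1 t1 x2 a2 t2 where "(x1,a1)\<in>R" "(x2,a2)\<in>R" "x = x1 + t1 *\<^sub>R v" "a = a1 + t1 * c"
      "y = x2 + t2 *\<^sub>R v" "b = a2 + t2 * c" unfolding R'_def by blast
    then show "(x+y,a+b)\<in>R'" unfolding R'_def
      by (intro CollectI exI[of _ "x1+x2"] exI[of _ "a1+a2"] exI[of _ "t1+t2"])
        (auto simp: Radd algebra_simps)
  next
    fix x a d assume "(x,a)\<in>R'"
    then obtain x1 a1 t1 where "(x1,a1)\<in>R" "x = x1 + t1 *\<^sub>R v" "a = a1 + t1 * c" unfolding R'_def by blast
    then have "(d *\<^sub>R x1, d*a1) \<in> R" "d *\<^sub>R x = d *\<^sub>R x1 + (d*t1) *\<^sub>R v" "d*a = d*a1 + (d*t1)*c"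
      using Rsc by (auto simp: algebra_simps)
    then show "(d *\<^sub>R x, d*a)\<in>R'" unfolding R'_def by blast
  next
    fix x a assume "(x,a)\<in>R'"
    then show "a \<le> p x" unfolding R'_def using dom by auto
  qed
  moreover have "R \<subseteq> R'" unfolding R'_def by force
  moreover have "(v, c) \<in> R'" unfolding R'_def using z by force
  ultimately show ?thesis using v by blast
qed

lemma HB:
  assumes p: "sublin p"
  shows "\<exists>\<phi>. linear \<phi> \<and> (\<forall>x. \<phi> x \<le> p x) \<and> \<phi> y = p y"
proof -
  have padd: "\<And>x y. p (x+y) \<le> p x + p y" and phom: "\<And>t x. t \<ge> 0 \<Longrightarrow> p (t *\<^sub>R x) = t * p x"
    using p unfolding sublin_def by auto
  have p0: "p 0 = 0" using sublin_0[OF p] .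
  define R0 where "R0 = {(t *\<^sub>R y, t * p y) | t. True}"
  have R0: "gok p R0" unfolding gok_def
  proof (intro conjI allI impI)
    fix x a x' b assume "(x,a)\<in>R0" "(x',b)\<in>R0"
    then obtain t t' where "x = t *\<^sub>R y" "a = t * p y" "x' = t' *\<^sub>R y" "b = t' * p y" unfolding R0_def by blast
    then have "x + x' = (t+t') *\<^sub>R y" "a + b = (t + t') * p y" by (auto simp: algebra_simps)
    then show "(x+x',a+b)\<in>R0" unfolding R0_def by blast
  next
    fix x a c assume "(x,a)\<in>R0"
    then obtain t where "x = t *\<^sub>R y" "a = t * p y" unfolding R0_def by blast
    then have "c *\<^sub>R x = (c*t) *\<^sub>R y" "c * a = (c*t) * p y" by auto
    then show "(c *\<^sub>R x, c*a)\<in>R0" unfolding R0_def by blast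
  next
    fix x a assume "(x,a)\<in>R0"
    then obtain t where x: "x = t *\<^sub>R y" "a = t * p y" unfolding R0_def by blast
    show "a \<le> p x"
    proof (cases "t \<ge> 0")
      case True then show ?thesis using phom x by simp
    next
      case False
      have "0 \<le> p y + p (-y)" using padd[of y "-y"] p0 by simp
      moreover have "p x = (-t) * p (-y)" using phom[of "-t" "-y"] False x by simp
      moreover have "(-t) * (- p y) \<le> (-t) * p (-y)"
        using \<open>0 \<le> p y + p (-y)\<close> False by (intro mult_left_mono) auto
      ultimately have "t * p y \<le> p x" by simp
      then show ?thesis using x by simp
    qed
  qed
  define A where "A = {R. R0 \<subseteq> R \<and> gok p R}"
  have "\<exists>M\<in>A. \<forall>X\<in>A. M \<subseteq> X \<longrightarrow> X = M"
  proof (rule Zorn_Lemma2, intro ballI)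
    fix C assume C: "C \<in> chains A"
    show "\<exists>U\<in>A. \<forall>X\<in>C. X \<subseteq> U"
    proof (cases "C = {}")
      case True then show ?thesis using R0 unfolding A_def by blast
    next
      case False
      have CA: "C \<subseteq> A" and ch: "\<And>X Y. X \<in> C \<Longrightarrow> Y \<in> C \<Longrightarrow> X \<subseteq> Y \<or> Y \<subseteq> X"
        using C unfolding chains_def chain_subset_def by auto
      have "gok p (\<Union>C)" unfolding gok_def
      proof (intro conjI allI impI)
        fix x a x' b assume "(x,a)\<in>\<Union>C" "(x',b)\<in>\<Union>C"
        then obtain X Y where "X\<in>C" "Y\<in>C" "(x,a)\<in>X" "(x',b)\<in>Y" by blast
        then show "(x+x',a+b)\<in>\<Union>C" using ch[of X Y] CA unfolding A_def gok_def by blast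
      next
        fix x a c assume "(x,a)\<in>\<Union>C"
        then show "(c *\<^sub>R x, c*a)\<in>\<Union>C" using CA unfolding A_def gok_def by blast
      next
        fix x a assume "(x,a)\<in>\<Union>C"
        then show "a \<le> p x" using CA unfolding A_def gok_def by blast
      qed
      moreover have "R0 \<subseteq> \<Union>C" using False CA unfolding A_def by blast
      ultimately show ?thesis unfolding A_def by blast
    qed
  qed
  then obtain M where MA: "M \<in> A" and Mmax: "\<And>X. X\<in>A \<Longrightarrow> M \<subseteq> X \<Longrightarrow> X = M" by blast
  have Mg: "gok p M" and R0M: "R0 \<subseteq> M" using MA unfolding A_def by auto
  have tot: "\<exists>a. (v,a) \<in> M" for v
  proof (rule ccontr)
    assume "\<not> ?thesis"
    moreover have "M \<noteq> {}" using R0M unfolding R0_def by blast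
    ultimately obtain R' where "gok p R'" "M \<subseteq> R'" "M \<noteq> R'" using gok_extend[OF p Mg] by blast
    moreover then have "R' \<in> A" using R0M unfolding A_def by blast
    ultimately show False using Mmax by blast
  qed
  define \<phi> where "\<phi> v = (SOME a. (v,a) \<in> M)" for v
  have phM: "(v, \<phi> v) \<in> M" for v unfolding \<phi>_def using tot[of v] by (rule someI_ex)
  have un: "(v,a) \<in> M \<Longrightarrow> \<phi> v = a" for v a using gok_unique[OF p Mg phM] by blast
  have Madd: "\<And>x a y b. (x,a)\<in>M \<Longrightarrow> (y,b)\<in>M \<Longrightarrow> (x+y,a+b)\<in>M"
   and Msc: "\<And>x a c. (x,a)\<in>M \<Longrightarrow> (c *\<^sub>R x, c*a)\<in>M"
   and Mle: "\<And>x a. (x,a)\<in>M \<Longrightarrow> a \<le> p x" using Mg unfolding gok_def by auto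
  have "linear \<phi>"
    by (rule linearI) (auto intro!: un Madd Msc phM)
  moreover have "\<forall>x. \<phi> x \<le> p x" using Mle phM by blast
  moreover have "(y, p y) \<in> M" using R0M unfolding R0_def by (force intro: exI[of _ 1])
  ultimately show ?thesis using un by blast
qed

definition mink :: "'v::real_vector set \<Rightarrow> 'v \<Rightarrow> real" where
  "mink D v = Inf {l. l > 0 \<and> inverse l *\<^sub>R v \<in> D}"

lemma mink_props:
  assumes D: "convex D" "0 \<in> D" and ab: "\<And>v. \<exists>e>0. e *\<^sub>R v \<in> D"
  shows "sublin (mink D)" "\<And>v. v \<in> D \<Longrightarrow> mink D v \<le> 1" "\<And>v. mink D v < 1 \<Longrightarrow> v \<in> D"
    "\<And>v. mink D v \<ge> 0"
proof -
  define L where "L v = {l. l > 0 \<and> inverse l *\<^sub>R v \<in> D}" for v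
  have mk: "mink D v = Inf (L v)" for v unfolding mink_def L_def ..
  have Lne: "L v \<noteq> {}" for v
  proof -
    obtain e where "e > 0" "e *\<^sub>R v \<in> D" using ab by blast
    then have "inverse e \<in> L v" unfolding L_def by simp
    then show ?thesis by blast
  qed
  have Lbdd: "bdd_below (L v)" for v unfolding L_def bdd_below_def by (auto intro: exI[of _ 0])
  have Lpos: "l \<in> L v \<Longrightarrow> l > 0" for l v unfolding L_def by auto
  have Lup: "m \<in> L v" if "l \<in> L v" "m \<ge> l" for l m v
  proof -
    have l: "l > 0" "inverse l *\<^sub>R v \<in> D" using that unfolding L_def by auto
    then have m: "m > 0" using that by simp
    have "(l / m) *\<^sub>R (inverse l *\<^sub>R v) + (1 - l/m) *\<^sub>R 0 \<in> D"
      using convexD[OF D(1) l(2) D(2), of "l/m" "1 - l/m"] l m that by auto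
    moreover have "l / m * inverse l = inverse m" using l(1) by (simp add: field_simps)
    then have "(l / m) *\<^sub>R (inverse l *\<^sub>R v) = inverse m *\<^sub>R v" by simp
    ultimately have "inverse m *\<^sub>R v \<in> D" by (metis add.right_neutral scaleR_zero_right)
    then show ?thesis using m unfolding L_def by simp
  qed
  show nn: "mink D v \<ge> 0" for v unfolding mk by (rule cInf_greatest[OF Lne]) (auto dest: Lpos)
  have L0: "L 0 = {0<..}" unfolding L_def using D(2) by auto
  have m0: "mink D 0 = 0" unfolding mk L0 by simp
  have Lsc: "t * l \<in> L (t *\<^sub>R v)" if "l \<in> L v" "t > 0" for l v t
  proof -
    have lv: "l > 0" "inverse l *\<^sub>R v \<in> D" using that(1) unfolding L_def by auto
    have e1: "inverse (t*l) * t = inverse l" using that(2) lv(1) by (simp add: field_simps)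
    have eq: "inverse (t*l) *\<^sub>R (t *\<^sub>R v) = inverse l *\<^sub>R v" by (simp only: scaleR_scaleR e1)
    have "inverse (t*l) *\<^sub>R (t *\<^sub>R v) \<in> D" by (subst eq) (rule lv(2))
    moreover have "t * l > 0" using that(2) lv(1) by simp
    ultimately show ?thesis unfolding L_def by blast
  qed
  have hom1: "mink D (t *\<^sub>R v) \<le> t * mink D v" if t: "t > 0" for t v
  proof -
    have "mink D (t *\<^sub>R v) / t \<le> l" if "l \<in> L v" for l
    proof -
      have "mink D (t *\<^sub>R v) \<le> t * l" unfolding mk by (rule cInf_lower[OF Lsc[OF that t] Lbdd])
      then show ?thesis using t by (simp add: field_simps)
    qed
    then have "mink D (t *\<^sub>R v) / t \<le> mink D v" unfolding mk[of v] by (intro cInf_greatest[OF Lne])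
    then show ?thesis using t by (simp add: field_simps)
  qed
  have hom: "mink D (t *\<^sub>R v) = t * mink D v" if t: "t \<ge> 0" for t v
  proof (cases "t = 0")
    case True then show ?thesis using m0 by simp
  next
    case False
    then have t: "t > 0" using t by simp
    have "mink D v = mink D (inverse t *\<^sub>R (t *\<^sub>R v))" using t by simp
    also have "\<dots> \<le> inverse t * mink D (t *\<^sub>R v)" using hom1[of "inverse t" "t *\<^sub>R v"] t by simp
    finally have "t * mink D v \<le> mink D (t *\<^sub>R v)" using t by (simp add: field_simps)
    then show ?thesis using hom1[OF t, of v] by linarith
  qed
  have Ladd: "l + m \<in> L (v + w)" if "l \<in> L v" "m \<in> L w" for l m v w
  proof -
    have l: "l > 0" "inverse l *\<^sub>R v \<in> D" and m: "m > 0" "inverse m *\<^sub>R w \<in> D"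
      using that unfolding L_def by auto
    have s1: "l/(l+m) + m/(l+m) = 1" using l m by (simp add: add_divide_distrib[symmetric])
    have comb: "(l/(l+m)) *\<^sub>R (inverse l *\<^sub>R v) + (m/(l+m)) *\<^sub>R (inverse m *\<^sub>R w) \<in> D"
      by (rule convexD[OF D(1) l(2) m(2)]) (use l m s1 in auto)
    have c1: "l/(l+m) * inverse l = inverse (l+m)" and c2: "m/(l+m) * inverse m = inverse (l+m)"
      using l m by (simp_all add: field_simps)
    have "inverse (l+m) *\<^sub>R (v + w) \<in> D" using comb
      by (simp only: scaleR_scaleR c1 c2 scaleR_add_right)
    moreover have "l + m > 0" using l m by simp
    ultimately show ?thesis unfolding L_def by blast
  qed
  have sub: "mink D (v + w) \<le> mink D v + mink D w" for v w
  proof -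
    have "mink D (v + w) - m \<le> mink D v" if m: "m \<in> L w" for m
    proof -
      have "mink D (v+w) - m \<le> l" if "l \<in> L v" for l
        using cInf_lower[OF Ladd[OF that m] Lbdd] unfolding mk by simp
      then show ?thesis unfolding mk[of v] by (intro cInf_greatest[OF Lne]) 
    qed
    then have "mink D (v + w) - mink D v \<le> m" if "m \<in> L w" for m using that by force
    then have "mink D (v + w) - mink D v \<le> mink D w" unfolding mk[of w] by (intro cInf_greatest[OF Lne])
    then show ?thesis by simp
  qed
  show "sublin (mink D)" unfolding sublin_def using sub hom by blast
  show "mink D v \<le> 1" if "v \<in> D" for v
    unfolding mk by (rule cInf_lower[OF _ Lbdd]) (use that in \<open>simp add: L_def\<close>)
  show "v \<in> D" if lt: "mink D v < 1" for v
  proof -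
    obtain l where l: "l \<in> L v" "l < 1" using cInf_lessD[OF Lne lt[unfolded mk]] by blast
    then have lp: "l > 0" "inverse l *\<^sub>R v \<in> D" unfolding L_def by auto
    have "l *\<^sub>R (inverse l *\<^sub>R v) + (1 - l) *\<^sub>R 0 \<in> D"
      using convexD[OF D(1) lp(2) D(2), of l "1 - l"] l lp by auto
    then show ?thesis using lp by simp
  qed
qed

lemma sep_alg:
  fixes K U :: "'v::real_vector set"
  assumes K: "convex K" "k0 \<in> K" and U: "convex U" "0 \<in> U" and ab: "\<And>v. \<exists>e>0. e *\<^sub>R v \<in> U"
    and z: "\<And>k u. k \<in> K \<Longrightarrow> u \<in> U \<Longrightarrow> z \<noteq> k + u"
  shows "\<exists>\<phi>::'v\<Rightarrow>real. linear \<phi> \<and> (\<forall>u\<in>U. \<phi> u \<le> 1) \<and> (\<exists>\<delta>>0. \<forall>k\<in>K. \<phi> k + \<delta> \<le> \<phi> z)"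
proof -
  define D where "D = {k - k0 + u | k u. k \<in> K \<and> u \<in> U}"
  have UD: "U \<subseteq> D" unfolding D_def using K(2) by force
  have D0: "0 \<in> D" using UD U(2) by blast
  have Dc: "convex D" unfolding convex_def
  proof (intro ballI allI impI)
    fix x y and a b :: real assume "x \<in> D" "y \<in> D" and ab': "0 \<le> a" "0 \<le> b" "a + b = 1"
    then obtain k1 u1 k2 u2 where ku: "k1\<in>K" "u1\<in>U" "k2\<in>K" "u2\<in>U" "x = k1 - k0 + u1" "y = k2 - k0 + u2"
      unfolding D_def by blast
    have "a *\<^sub>R x + b *\<^sub>R y = (a *\<^sub>R k1 + b *\<^sub>R k2) - (a + b) *\<^sub>R k0 + (a *\<^sub>R u1 + b *\<^sub>R u2)"
      unfolding ku(5) ku(6) by (simp add: algebra_simps)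
    then have "a *\<^sub>R x + b *\<^sub>R y = (a *\<^sub>R k1 + b *\<^sub>R k2) - k0 + (a *\<^sub>R u1 + b *\<^sub>R u2)"
      using ab' by simp
    moreover have "a *\<^sub>R k1 + b *\<^sub>R k2 \<in> K" using convexD[OF K(1)] ku ab' by blast
    moreover have "a *\<^sub>R u1 + b *\<^sub>R u2 \<in> U" using convexD[OF U(1)] ku ab' by blast
    ultimately show "a *\<^sub>R x + b *\<^sub>R y \<in> D" unfolding D_def by blast
  qed
  have abD: "\<exists>e>0. e *\<^sub>R v \<in> D" for v using ab UD by blast
  note mp = mink_props[OF Dc D0 abD]
  define y where "y = z - k0"
  have my: "mink D y \<ge> 1"
  proof (rule ccontr)
    assume "\<not> ?thesis"
    then have "y \<in> D" using mp(3) by simp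
    then obtain k u where "k \<in> K" "u \<in> U" "y = k - k0 + u" unfolding D_def by blast
    then show False using z[of k u] unfolding y_def by (simp add: algebra_simps)
  qed
  obtain \<phi> where ph: "linear \<phi>" "\<And>x. \<phi> x \<le> mink D x" "\<phi> y = mink D y" using HB[OF mp(1)] by blast
  obtain e where e: "e > 0" "e *\<^sub>R y \<in> U" using ab by blast
  have kk: "\<phi> k + e \<le> \<phi> z" if k: "k \<in> K" for k
  proof -
    have "k - k0 + e *\<^sub>R y \<in> D" unfolding D_def using k e by blast
    then have "\<phi> (k - k0 + e *\<^sub>R y) \<le> 1" using ph(2) mp(2) by (meson order_trans)
    then have "\<phi> k - \<phi> k0 + e * mink D y \<le> 1" using ph(1) ph(3)
      by (simp add: linear_add linear_diff linear_scale)
    moreover have "\<phi> z = \<phi> k0 + mink D y" using ph(1) ph(3) unfolding y_def by (simp add: linear_diff)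
    moreover have "0 \<le> (mink D y - 1) * (1 + e)" using my e by simp
    then have "1 - e * mink D y \<le> mink D y - e" by (simp add: algebra_simps)
    ultimately show ?thesis by linarith
  qed
  moreover have "\<forall>u\<in>U. \<phi> u \<le> 1" using UD ph(2) mp(2) by (meson order_trans subsetD)
  moreover have "\<exists>\<delta>>0. \<forall>k\<in>K. \<phi> k + \<delta> \<le> \<phi> z" using e(1) kk by blast
  ultimately show ?thesis using ph(1) by (intro exI[of _ \<phi>] conjI) auto
qed


lemma lcs_scale_cont:
  assumes "lcs TYPE('a::{real_vector,t2_space})"
  shows "continuous_on UNIV (\<lambda>p::real \<times> 'a. fst p *\<^sub>R snd p)"
  using assms unfolding lcs_def by blast

lemma lcs_add_cont:
  assumes "lcs TYPE('a::{real_vector,t2_space})"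
  shows "continuous_on UNIV (\<lambda>p::'a \<times> 'a. fst p + snd p)"
  using assms unfolding lcs_def by blast

lemma cont_aff:
  assumes L: "lcs TYPE('a::{real_vector,t2_space})"
  shows "continuous_on UNIV (\<lambda>w::'a. c *\<^sub>R w + d)"
proof -
  have s: "continuous_on UNIV (\<lambda>w::'a. c *\<^sub>R w)"
    using continuous_on_compose2[OF lcs_scale_cont[OF L], of UNIV "\<lambda>w. (c, w)"]
    by (simp add: continuous_on_Pair continuous_on_const continuous_on_id)
  show ?thesis
    using continuous_on_compose2[OF lcs_add_cont[OF L], of UNIV "\<lambda>w. (c *\<^sub>R w, d)"]
    by (simp add: continuous_on_Pair continuous_on_const s)
qed

lemma cont_line:
  assumes L: "lcs TYPE('a::{real_vector,t2_space})"
  shows "continuous_on UNIV (\<lambda>t::real. t *\<^sub>R u + (d::'a))"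
proof -
  have s: "continuous_on UNIV (\<lambda>t::real. t *\<^sub>R u)"
    using continuous_on_compose2[OF lcs_scale_cont[OF L], of UNIV "\<lambda>t. (t, u)"]
    by (simp add: continuous_on_Pair continuous_on_const continuous_on_id)
  show ?thesis
    using continuous_on_compose2[OF lcs_add_cont[OF L], of UNIV "\<lambda>t. (t *\<^sub>R u, d)"]
    by (simp add: continuous_on_Pair continuous_on_const s)
qed

lemma open_aff:
  assumes L: "lcs TYPE('a::{real_vector,t2_space})" and V: "open V"
  shows "open {w::'a. c *\<^sub>R w + d \<in> V}"
  using continuous_open_preimage[OF cont_aff[OF L, of c d] open_UNIV V] by (simp add: vimage_def)

lemma absorb:
  assumes L: "lcs TYPE('a::{real_vector,t2_space})" and U: "open U" "(0::'a) \<in> U"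
  shows "\<exists>e>0. \<forall>t. \<bar>t\<bar> < e \<longrightarrow> t *\<^sub>R v \<in> U"
proof -
  have "open {t::real. t *\<^sub>R v + 0 \<in> U}"
    using continuous_open_preimage[OF cont_line[OF L, of v 0] open_UNIV U(1)] by (simp add: vimage_def)
  moreover have "(0::real) \<in> {t::real. t *\<^sub>R v + 0 \<in> U}" using U by simp
  ultimately obtain e where "e > 0" "\<forall>y. dist y 0 < e \<longrightarrow> y \<in> {t::real. t *\<^sub>R v + 0 \<in> U}"
    unfolding open_dist by blast
  then show ?thesis by (auto simp: dist_real_def)
qed

lemma convex_nbhd:
  assumes L: "lcs TYPE('a::{real_vector,t2_space})" and W: "open W" "(x::'a) \<in> W"
  shows "\<exists>V. open V \<and> convex V \<and> 0 \<in> V \<and> (\<forall>v\<in>V. x + v \<in> W)"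
proof -
  have "open {w::'a. 1 *\<^sub>R w + x \<in> W}" by (rule open_aff[OF L W(1)])
  moreover have "0 \<in> {w::'a. 1 *\<^sub>R w + x \<in> W}" using W by simp
  ultimately obtain V where "open V" "convex V" "0 \<in> V" "V \<subseteq> {w::'a. 1 *\<^sub>R w + x \<in> W}"
    using L unfolding lcs_def by meson
  then show ?thesis by (auto simp: add.commute)
qed

lemma cont_bounded:
  assumes L: "lcs TYPE('a::{real_vector,t2_space})" and ph: "linear (\<phi>::'a \<Rightarrow> real)"
    and U: "open U" "0 \<in> U" "\<And>u. u \<in> U \<Longrightarrow> \<phi> u \<le> 1"
  shows "continuous_on UNIV \<phi>"
proof -
  have "open (\<phi> -` B)" if B: "open B" for B
  proof (rule topological_space_class.openI)
    fix v assume "v \<in> \<phi> -` B"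
    then obtain e where e: "e > 0" "\<forall>y. dist y (\<phi> v) < e \<longrightarrow> y \<in> B" using B unfolding open_dist by auto
    define c where "c = 2 / e"
    have c: "c > 0" using e unfolding c_def by simp
    define N where "N = {w. c *\<^sub>R w + (- c *\<^sub>R v) \<in> U} \<inter> {w. (-c) *\<^sub>R w + (c *\<^sub>R v) \<in> U}"
    have "open N" unfolding N_def by (intro open_Int open_aff[OF L U(1)])
    moreover have "v \<in> N" unfolding N_def using U(2) by simp
    moreover have "N \<subseteq> \<phi> -` B"
    proof
      fix w assume "w \<in> N"
      then have "\<phi> (c *\<^sub>R w + (- c *\<^sub>R v)) \<le> 1" "\<phi> ((-c) *\<^sub>R w + (c *\<^sub>R v)) \<le> 1"
        unfolding N_def using U(3) by auto
      then have "c * (\<phi> w - \<phi> v) \<le> 1" "c * (\<phi> v - \<phi> w) \<le> 1"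
        using ph by (simp_all add: linear_add linear_scale linear_diff linear_neg algebra_simps)
      then have "\<bar>\<phi> w - \<phi> v\<bar> \<le> 1 / c" using c by (simp add: field_simps abs_le_iff)
      also have "1 / c < e" using e unfolding c_def by simp
      finally show "w \<in> \<phi> -` B" using e by (simp add: dist_real_def)
    qed
    ultimately show "\<exists>T. open T \<and> v \<in> T \<and> T \<subseteq> \<phi> -` B" by blast
  qed
  then show ?thesis using continuous_on_open_vimage[OF open_UNIV] by auto
qed

lemma dual_add: "a \<in> dual \<Longrightarrow> b \<in> dual \<Longrightarrow> (\<lambda>x. a x + b x) \<in> dual"
  unfolding dual_def by (auto intro: linear_compose_add continuous_on_add)

lemma dual_scale: "a \<in> dual \<Longrightarrow> (\<lambda>x. c * a x) \<in> dual"
  unfolding dual_def by (auto simp: linear_iff algebra_simps intro: continuous_on_mult_left)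

lemma gamma_conv_real:
  assumes "\<phi> \<in> Gamma" "\<phi> x \<le> ereal a" "\<phi> y \<le> ereal b" "0 \<le> t" "t \<le> 1"
  shows "\<phi> ((1 - t) *\<^sub>R x + t *\<^sub>R y) \<le> ereal ((1 - t) * a + t * b)"
proof -
  consider "t = 0" | "t = 1" | "0 < t \<and> t < 1" using assms by linarith
  then show ?thesis
  proof cases
    case 1 then show ?thesis using assms by simp
  next
    case 2 then show ?thesis using assms by simp
  next
    case 3
    then have "\<phi> ((1 - t) *\<^sub>R x + t *\<^sub>R y) \<le> ereal (1 - t) * \<phi> x + ereal t * \<phi> y"
      using assms(1) unfolding Gamma_def by auto
    also have "\<dots> \<le> ereal (1 - t) * ereal a + ereal t * ereal b"
      using 3 assms by (intro add_mono ereal_mult_left_mono) auto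
    finally show ?thesis by simp
  qed
qed


lemma sep_epi:
  fixes \<phi> :: "'a::{real_vector,t2_space} \<Rightarrow> ereal"
  assumes L: "lcs TYPE('a)" and G: "\<phi> \<in> Gamma" and r: "ereal r < \<phi> x"
  shows "\<exists>b c \<delta>. b \<in> dual \<and> c \<ge> 0 \<and> \<delta> > 0 \<and>
     (\<forall>y s. \<phi> y \<le> ereal s \<longrightarrow> b y - c * s + \<delta> \<le> b x - c * r)"
proof -
  obtain c0 where c0: "ereal r < ereal c0" "ereal c0 < \<phi> x" using ereal_dense2[OF r] by blast
  define m where "m = c0 - r"
  have m: "m > 0" using c0 unfolding m_def by simp
  define W where "W = - {y. \<phi> y \<le> ereal c0}"
  have "closed {y. \<phi> y \<le> ereal c0}" using G unfolding Gamma_def by blast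
  then have Wo: "open W" unfolding W_def by (simp add: open_Compl)
  have xW: "x \<in> W" unfolding W_def using c0 by auto
  obtain V where V: "open V" "convex V" "0 \<in> V" "\<And>v. v \<in> V \<Longrightarrow> x + v \<in> W"
    using convex_nbhd[OF L Wo xW] by blast
  obtain x0 where x0: "\<phi> x0 \<noteq> \<infinity>" using G unfolding Gamma_def by blast
  have "\<phi> x0 \<noteq> -\<infinity>" using G unfolding Gamma_def by blast
  then obtain s0 where s0: "\<phi> x0 = ereal s0" using x0 by (cases "\<phi> x0") auto
  define K where "K = {p::'a \<times> real. \<phi> (fst p) \<le> ereal (snd p)}"
  have Kc: "convex K" unfolding convex_def
  proof (intro ballI allI impI)
    fix p q :: "'a \<times> real" and a b :: real
    assume pq: "p \<in> K" "q \<in> K" and ab: "0 \<le> a" "0 \<le> b" "a + b = 1"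
    then have a: "a = 1 - b" by simp
    have "\<phi> ((1 - b) *\<^sub>R fst p + b *\<^sub>R fst q) \<le> ereal ((1 - b) * snd p + b * snd q)"
      using gamma_conv_real[OF G, of "fst p" "snd p" "fst q" "snd q" b] pq ab unfolding K_def by auto
    then show "a *\<^sub>R p + b *\<^sub>R q \<in> K" unfolding K_def a by simp
  qed
  have k0: "(x0, s0) \<in> K" unfolding K_def using s0 by simp
  define U where "U = (uminus ` V) \<times> {-m<..<m}"
  have Uc: "convex U" unfolding U_def
    by (intro convex_Times convex_negations V(2)) (simp add: convex_real_interval)
  have U0: "0 \<in> U" unfolding U_def zero_prod_def using V(3) m by force
  have Uab: "\<exists>e>0. e *\<^sub>R w \<in> U" for w
  proof -
    obtain v s where w: "w = (v, s)" by (cases w)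
    obtain e1 where e1: "e1 > 0" "\<And>t. \<bar>t\<bar> < e1 \<Longrightarrow> t *\<^sub>R (-v) \<in> V"
      using absorb[OF L V(1) V(3), of "-v"] by blast
    define q where "q = m / (\<bar>s\<bar> + 1)"
    have q: "q > 0" using m unfolding q_def by simp
    define mm where "mm = min e1 q"
    have mm: "mm \<le> e1" "mm \<le> q" "mm > 0" unfolding mm_def using q e1 by auto
    define e where "e = mm / 2"
    have e0: "e > 0" using mm unfolding e_def by linarith
    have e1': "e < e1" using mm unfolding e_def by linarith
    have e2: "e < q" using mm unfolding e_def by linarith
    note e = e0 e1' e2[unfolded q_def]
    have "-(e *\<^sub>R v) \<in> V" using e1(2)[of e] e by simp
    then have "e *\<^sub>R v \<in> uminus ` V" using image_eqI[of "e *\<^sub>R v" uminus "-(e *\<^sub>R v)" V] by simp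
    moreover have "\<bar>e * s\<bar> < m"
    proof -
      have "\<bar>e * s\<bar> = e * \<bar>s\<bar>" using e by (simp add: abs_mult)
      also have "\<dots> \<le> e * (\<bar>s\<bar> + 1)" using e by simp
      also have "\<dots> < m" using e(3) by (simp add: field_simps)
      finally show ?thesis .
    qed
    ultimately show ?thesis using e unfolding U_def w by (intro exI[of _ e]) auto
  qed
  have z: "(x, r) \<noteq> k + u" if "k \<in> K" "u \<in> U" for k u
  proof
    assume eq: "(x, r) = k + u"
    obtain y s' where k: "k = (y, s')" by (cases k)
    obtain v s where u: "u = (v, s)" by (cases u)
    from that k u obtain v' where v': "v' \<in> V" "v = - v'" "\<bar>s\<bar> < m" "\<phi> y \<le> ereal s'"
      unfolding U_def K_def by auto
    have "y = x + v'" "s' = r - s" using eq k u v' by auto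
    then have "y \<in> W" using V(4) v' by simp
    then have "\<phi> y > ereal c0" unfolding W_def by auto
    moreover have "s' < c0" using \<open>s' = r - s\<close> v'(3) unfolding m_def by simp
    moreover have "ereal s' < ereal c0" using \<open>s' < c0\<close> by simp
    then have "\<phi> y < ereal c0" using v'(4) by (rule le_less_trans[rotated])
    ultimately show False by simp
  qed
  obtain \<Phi> :: "'a \<times> real \<Rightarrow> real" and \<delta> where Ph: "linear \<Phi>" "\<forall>u\<in>U. \<Phi> u \<le> 1" "\<delta> > 0"
    "\<And>k. k \<in> K \<Longrightarrow> \<Phi> k + \<delta> \<le> \<Phi> (x, r)"
    using sep_alg[OF Kc k0 Uc U0 Uab z] by blast
  define b where "b y = \<Phi> (y, 0)" for y
  define c where "c = - \<Phi> (0, 1)"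
  have dec: "\<Phi> (y, s) = b y - c * s" for y s
  proof -
    have "(y, s) = (y, 0) + s *\<^sub>R (0, 1)" by simp
    then have "\<Phi> (y, s) = \<Phi> (y, 0) + s * \<Phi> (0, 1)"
      using linear_add[OF Ph(1), of "(y,0)" "s *\<^sub>R (0,1)"] linear_scale[OF Ph(1), of s "(0,1)"] by simp
    then show ?thesis unfolding b_def c_def by simp
  qed
  have bl: "linear b" unfolding linear_iff b_def
  proof (intro conjI allI)
    fix y1 y2 :: 'a show "\<Phi> (y1 + y2, 0) = \<Phi> (y1, 0) + \<Phi> (y2, 0)"
      using linear_add[OF Ph(1), of "(y1,0)" "(y2,0)"] by simp
  next
    fix t and y :: 'a show "\<Phi> (t *\<^sub>R y, 0) = t *\<^sub>R \<Phi> (y, 0)"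
      using linear_scale[OF Ph(1), of t "(y,0)"] by simp
  qed
  have bc: "continuous_on UNIV b"
  proof (rule cont_bounded[OF L bl])
    show "open {w::'a. (-1) *\<^sub>R w + 0 \<in> V}" by (rule open_aff[OF L V(1)])
    show "0 \<in> {w::'a. (-1) *\<^sub>R w + 0 \<in> V}" using V(3) by simp
    fix u assume "u \<in> {w::'a. (-1) *\<^sub>R w + 0 \<in> V}"
    then have "-u \<in> V" by simp
    then have "(u, 0) \<in> U" unfolding U_def using m image_eqI[of u uminus "-u" V] by auto
    then show "b u \<le> 1" using Ph(2) unfolding b_def by blast
  qed
  have bd: "b \<in> dual" unfolding dual_def using bl bc by simp
  have cpos: "c \<ge> 0"
  proof (rule ccontr)
    assume "\<not> c \<ge> 0"
    then have cn: "-c > 0" by simp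
    define M where "M = \<Phi> (x, r) - b x0"
    define s where "s = \<bar>s0\<bar> + \<bar>M\<bar> / (-c) + 1"
    have "0 \<le> \<bar>M\<bar> / (-c)" using cn by (intro divide_nonneg_pos) auto
    then have "s0 \<le> s" unfolding s_def by linarith
    then have "(x0, s) \<in> K" unfolding K_def using s0 by simp
    from Ph(4)[OF this] have "b x0 - c * s + \<delta> \<le> \<Phi> (x, r)" unfolding dec .
    moreover have "(-c) * s = (-c) * \<bar>s0\<bar> + \<bar>M\<bar> + (-c)" unfolding s_def using cn
      by (simp add: field_simps)
    moreover have "(-c) * \<bar>s0\<bar> \<ge> 0" using cn by (intro mult_nonneg_nonneg) auto
    ultimately show False using Ph(3) cn unfolding M_def by linarith
  qed
  have "\<forall>y s. \<phi> y \<le> ereal s \<longrightarrow> b y - c * s + \<delta> \<le> b x - c * r"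
  proof (intro allI impI)
    fix y s assume "\<phi> y \<le> ereal s"
    then have "(y, s) \<in> K" unfolding K_def by simp
    from Ph(4)[OF this] show "b y - c * s + \<delta> \<le> b x - c * r" unfolding dec .
  qed
  then show ?thesis using bd cpos Ph(3) by blast
qed


lemma aff_from_sep:
  assumes b: "b \<in> dual" and c: "c > 0" and d: "\<delta> > 0"
    and H: "\<forall>y s. \<phi> y \<le> ereal s \<longrightarrow> b y - c * s + \<delta> \<le> b x - c * r"
    and nm: "\<And>y. \<phi> y \<noteq> -\<infinity>"
  shows "\<exists>b' \<beta>. b' \<in> dual \<and> (\<forall>y. ereal (b' y - \<beta>) \<le> \<phi> y) \<and> r < b' x - \<beta>"
proof -
  define b' where "b' = (\<lambda>y. (1/c) * b y)"
  define \<beta> where "\<beta> = b x / c - r - \<delta> / c"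
  have "b' \<in> dual" unfolding b'_def by (rule dual_scale[OF b])
  moreover have "ereal (b' y - \<beta>) \<le> \<phi> y" for y
  proof (cases "\<phi> y")
    case (real s)
    then have "b y - c * s + \<delta> \<le> b x - c * r" using H by simp
    then have "(b y - c * s + \<delta>) / c \<le> (b x - c * r) / c" using c by (intro divide_right_mono) auto
    then have "b' y - \<beta> \<le> s" unfolding b'_def \<beta>_def using c by (simp add: field_simps)
    then show ?thesis using real by simp
  qed (use nm in auto)
  moreover have "r < b' x - \<beta>" unfolding b'_def \<beta>_def using c d by simp
  ultimately show ?thesis by blast
qed

lemma Gamma_nm: "\<phi> \<in> Gamma \<Longrightarrow> \<phi> y \<noteq> -\<infinity>"
  unfolding Gamma_def by blast

lemma Gamma_dom: "\<phi> \<in> Gamma \<Longrightarrow> \<exists>x0 s0. \<phi> x0 = ereal s0"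
proof -
  assume G: "\<phi> \<in> Gamma"
  then obtain x0 where "\<phi> x0 \<noteq> \<infinity>" unfolding Gamma_def by blast
  moreover have "\<phi> x0 \<noteq> -\<infinity>" using Gamma_nm[OF G] .
  ultimately show ?thesis by (cases "\<phi> x0") auto
qed

lemma FM:
  fixes \<phi> :: "'a::{real_vector,t2_space} \<Rightarrow> ereal"
  assumes L: "lcs TYPE('a)" and G: "\<phi> \<in> Gamma" and r: "ereal r < \<phi> x"
  shows "\<exists>b \<beta>. b \<in> dual \<and> (\<forall>y. ereal (b y - \<beta>) \<le> \<phi> y) \<and> r < b x - \<beta>"
proof -
  obtain b c \<delta> where bcd: "b \<in> dual" "c \<ge> 0" "\<delta> > 0"
    "\<forall>y s. \<phi> y \<le> ereal s \<longrightarrow> b y - c * s + \<delta> \<le> b x - c * r"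
    using sep_epi[OF L G r] by blast
  show ?thesis
  proof (cases "c > 0")
    case True then show ?thesis using aff_from_sep[OF bcd(1) True bcd(3) bcd(4) Gamma_nm[OF G]] by blast
  next
    case False
    then have c0: "c = 0" using bcd by simp
    obtain x0 s0 where s0: "\<phi> x0 = ereal s0" using Gamma_dom[OF G] by blast
    have "ereal (s0 - 1) < \<phi> x0" using s0 by simp
    then obtain b1 c1 \<delta>1 where b1: "b1 \<in> dual" "c1 \<ge> 0" "\<delta>1 > 0"
      "\<forall>y s. \<phi> y \<le> ereal s \<longrightarrow> b1 y - c1 * s + \<delta>1 \<le> b1 x0 - c1 * (s0 - 1)"
      using sep_epi[OF L G] by blast
    have "b1 x0 - c1 * s0 + \<delta>1 \<le> b1 x0 - c1 * (s0 - 1)" using b1(4) s0 by simp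
    then have "c1 > 0" using b1(3) by (simp add: algebra_simps)
    then obtain b0 \<beta>0 where b0: "b0 \<in> dual" "\<forall>y. ereal (b0 y - \<beta>0) \<le> \<phi> y"
      using aff_from_sep[OF b1(1) _ b1(3) b1(4) Gamma_nm[OF G]] by blast
    define \<mu> where "\<mu> = max 0 ((r - (b0 x - \<beta>0)) / \<delta>) + 1"
    have mu: "\<mu> \<ge> 0" "\<mu> \<ge> (r - (b0 x - \<beta>0)) / \<delta> + 1" unfolding \<mu>_def by auto
    define b' where "b' = (\<lambda>y. b0 y + \<mu> * b y)"
    define \<beta> where "\<beta> = \<beta>0 + \<mu> * (b x - \<delta>)"
    have "b' \<in> dual" unfolding b'_def by (intro dual_add dual_scale b0(1) bcd(1))
    moreover have "ereal (b' y - \<beta>) \<le> \<phi> y" for y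
    proof (cases "\<phi> y")
      case (real s)
      then have "b y + \<delta> \<le> b x" using bcd(4)[rule_format, of y s] c0 by simp
      then have "\<mu> * (b y - b x + \<delta>) \<le> 0" using mu(1) by (intro mult_nonneg_nonpos) auto
      moreover have "b0 y - \<beta>0 \<le> s" using b0(2) real by (metis ereal_less_eq(3))
      ultimately have "b' y - \<beta> \<le> s" unfolding b'_def \<beta>_def by (simp add: algebra_simps)
      then show ?thesis using real by simp
    qed (use Gamma_nm[OF G] in auto)
    moreover have "r < b' x - \<beta>"
    proof -
      have "\<mu> * \<delta> \<ge> ((r - (b0 x - \<beta>0)) / \<delta> + 1) * \<delta>" using mu(2) bcd(3) by (intro mult_right_mono) auto
      also have "((r - (b0 x - \<beta>0)) / \<delta> + 1) * \<delta> = r - (b0 x - \<beta>0) + \<delta>" using bcd(3) by (simp add: field_simps)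
      finally show ?thesis unfolding b'_def \<beta>_def using bcd(3) by (simp add: algebra_simps)
    qed
    ultimately show ?thesis by blast
  qed
qed


definition Q :: "('a::real_vector \<Rightarrow> ereal) \<Rightarrow> 'a \<Rightarrow> 'a \<Rightarrow> ereal" where
  "Q \<phi> v u = (SUP t\<in>{0<..}. (\<phi> (v + t *\<^sub>R u) - \<phi> v) / ereal t)"

lemma vec_id: "t > 0 \<Longrightarrow> (1 - s/t) *\<^sub>R v + (s/t) *\<^sub>R (v + t *\<^sub>R u) = v + s *\<^sub>R (u::'a::real_vector)"
proof -
  assume t: "t > 0"
  have "(s/t) *\<^sub>R (t *\<^sub>R u) = s *\<^sub>R u" using t by simp
  then show ?thesis by (simp add: algebra_simps)
qed

lemma quot_mono:
  assumes G: "\<phi> \<in> Gamma" and a: "\<phi> v = ereal a" and st: "0 < s" "s \<le> t"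
  shows "(\<phi> (v + s *\<^sub>R u) - \<phi> v) / ereal s \<le> (\<phi> (v + t *\<^sub>R u) - \<phi> v) / ereal t"
proof (cases "\<phi> (v + t *\<^sub>R u)")
  case PInf then show ?thesis using st a by simp
next
  case MInf then show ?thesis using Gamma_nm[OF G] by simp
next
  case (real b)
  have t: "t > 0" using st by simp
  have gc: "\<phi> ((1 - s/t) *\<^sub>R v + (s/t) *\<^sub>R (v + t *\<^sub>R u)) \<le> ereal ((1 - s/t) * a + (s/t) * b)"
    using gamma_conv_real[OF G, of v a "v + t *\<^sub>R u" b "s/t"] a real st t by simp
  have eq: "(1 - s/t) *\<^sub>R v + (s/t) *\<^sub>R (v + t *\<^sub>R u) = v + s *\<^sub>R u" by (rule vec_id[OF t])
  have le: "\<phi> (v + s *\<^sub>R u) \<le> ereal ((1 - s/t) * a + (s/t) * b)" by (subst eq[symmetric]) (rule gc)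
  then obtain c where c: "\<phi> (v + s *\<^sub>R u) = ereal c" using Gamma_nm[OF G] by (cases "\<phi> (v + s *\<^sub>R u)") auto
  have "c \<le> (1 - s/t) * a + (s/t) * b" using le c by simp
  moreover have "(1 - s/t) * a + (s/t) * b = a + (s/t) * (b - a)" using t by (simp add: field_simps)
  ultimately have "c - a \<le> (s/t) * (b - a)" by linarith
  then have "(c - a) / s \<le> (b - a) / t" using st t by (simp add: field_simps)
  then show ?thesis using c a real st t by simp
qed

lemma Lim_mono_SUP:
  fixes q :: "real \<Rightarrow> ereal"
  assumes mono: "\<And>s t. 0 < s \<Longrightarrow> s \<le> t \<Longrightarrow> q s \<le> q t"
  shows "Lim at_top q = (SUP t\<in>{0<..}. q t)"
proof (rule tendsto_Lim[OF trivial_limit_at_top_linorder], rule order_tendstoI)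
  fix a assume "a < (SUP t\<in>{0<..}. q t)"
  then obtain t0 where t0: "t0 > 0" "a < q t0" by (auto simp: less_SUP_iff)
  have "eventually (\<lambda>t. t \<ge> t0) at_top" by (rule eventually_ge_at_top)
  then show "eventually (\<lambda>t. a < q t) at_top"
    by eventually_elim (use t0 mono in \<open>blast intro: less_le_trans\<close>)
next
  fix a assume a: "(SUP t\<in>{0<..}. q t) < a"
  have "eventually (\<lambda>t. t > (0::real)) at_top" by (rule eventually_gt_at_top)
  then show "eventually (\<lambda>t. q t < a) at_top"
  proof eventually_elim
    case (elim t)
    have "q t \<le> (SUP t\<in>{0<..}. q t)" by (rule SUP_upper) (use elim in simp)
    then show ?case using a by (rule le_less_trans)
  qed
qed

lemma rec_base:
  fixes \<phi> :: "'a::{real_vector,t2_space} \<Rightarrow> ereal"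
  assumes L: "lcs TYPE('a)" and G: "\<phi> \<in> Gamma" and v0: "\<phi> v0 = ereal a0" and v1: "\<phi> v1 = ereal a1"
  shows "Q \<phi> v1 u \<le> Q \<phi> v0 u"
proof (cases "Q \<phi> v0 u = \<infinity>")
  case True then show ?thesis by simp
next
  case False
  have "(\<phi> (v0 + 1 *\<^sub>R u) - \<phi> v0) / ereal 1 \<le> Q \<phi> v0 u" unfolding Q_def by (rule SUP_upper) auto
  moreover have "(\<phi> (v0 + 1 *\<^sub>R u) - \<phi> v0) / ereal 1 \<noteq> -\<infinity>"
    using Gamma_nm[OF G, of "v0 + 1 *\<^sub>R u"] v0 by (cases "\<phi> (v0 + 1 *\<^sub>R u)") auto
  ultimately have "Q \<phi> v0 u \<noteq> -\<infinity>" by auto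
  with False obtain Lr where Lr: "Q \<phi> v0 u = ereal Lr" by (cases "Q \<phi> v0 u") auto
  have bnd0: "\<phi> (v0 + t *\<^sub>R u) \<le> ereal (a0 + t * Lr)" if t: "t > 0" for t
  proof -
    have q: "(\<phi> (v0 + t *\<^sub>R u) - \<phi> v0) / ereal t \<le> ereal Lr"
      unfolding Lr[symmetric] Q_def by (rule SUP_upper) (use t in auto)
    show ?thesis
    proof (cases "\<phi> (v0 + t *\<^sub>R u)")
      case PInf then show ?thesis using q v0 t by simp
    next
      case MInf then show ?thesis using Gamma_nm[OF G] by simp
    next
      case (real b)
      then have "(b - a0) / t \<le> Lr" using q v0 t by simp
      then have "b - a0 \<le> t * Lr" using t by (simp add: field_simps)
      then show ?thesis using real by simp
    qed
  qed
  have bnd1: "\<phi> (v1 + s *\<^sub>R u) \<le> ereal (a1 + s * Lr)" if s: "s > 0" for s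
  proof (rule ccontr)
    assume "\<not> ?thesis"
    then have "ereal (a1 + s * Lr) < \<phi> (v1 + s *\<^sub>R u)" by simp
    from ereal_dense2[OF this] obtain c' where c'0: "ereal (a1 + s * Lr) < ereal c'" "ereal c' < \<phi> (v1 + s *\<^sub>R u)"
      by blast
    then have c': "a1 + s * Lr < c'" "ereal c' < \<phi> (v1 + s *\<^sub>R u)" by auto
    define g where "g = (\<lambda>l::real. l *\<^sub>R (v0 - v1) + (v1 + s *\<^sub>R u))"
    have gc: "continuous_on UNIV g" unfolding g_def by (rule cont_line[OF L])
    have cl: "closed {w. \<phi> w \<le> ereal c'}" using G unfolding Gamma_def by blast
    define d where "d = min 1 ((c' - (a1 + s * Lr)) / (\<bar>a0 - a1\<bar> + 1))"
    have d: "d > 0" "d \<le> 1" "d \<le> (c' - (a1 + s * Lr)) / (\<bar>a0 - a1\<bar> + 1)"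
      using c' unfolding d_def by auto
    have ev: "eventually (\<lambda>l. g l \<in> {w. \<phi> w \<le> ereal c'}) (at_right 0)"
      using eventually_at_right_real[OF d(1)]
    proof eventually_elim
      case (elim l)
      then have l: "0 < l" "l < d" by auto
      then have l1: "l < 1" using d by simp
      have "\<phi> (v0 + (s/l) *\<^sub>R u) \<le> ereal (a0 + (s/l) * Lr)" using bnd0[of "s/l"] s l by simp
      then have "\<phi> ((1 - l) *\<^sub>R v1 + l *\<^sub>R (v0 + (s/l) *\<^sub>R u)) \<le> ereal ((1 - l) * a1 + l * (a0 + (s/l) * Lr))"
        using gamma_conv_real[OF G, of v1 a1 "v0 + (s/l) *\<^sub>R u" "a0 + (s/l) * Lr" l] v1 l l1 by simp
      moreover have "(1 - l) *\<^sub>R v1 + l *\<^sub>R (v0 + (s/l) *\<^sub>R u) = g l"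
      proof -
        have "l *\<^sub>R ((s/l) *\<^sub>R u) = s *\<^sub>R u" using l by simp
        then show ?thesis unfolding g_def by (simp add: algebra_simps)
      qed
      moreover have "(1 - l) * a1 + l * (a0 + (s/l) * Lr) \<le> c'"
      proof -
        have e1: "(1 - l) * a1 + l * (a0 + (s/l) * Lr) = a1 + s * Lr + l * (a0 - a1)"
          using l by (simp add: field_simps)
        have "l * (a0 - a1) \<le> l * \<bar>a0 - a1\<bar>" using l by (intro mult_left_mono) auto
        also have "\<dots> \<le> l * (\<bar>a0 - a1\<bar> + 1)" using l by simp
        also have "\<dots> < d * (\<bar>a0 - a1\<bar> + 1)" using l by (intro mult_strict_right_mono) auto
        also have "\<dots> \<le> c' - (a1 + s * Lr)" using d(3) by (simp add: field_simps)
        finally show ?thesis using e1 by simp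
      qed
      ultimately show ?case by (simp add: order_trans)
    qed
    have "(g \<longlongrightarrow> g 0) (at_right 0)"
    proof -
      have "isCont g 0" using gc continuous_on_eq_continuous_at open_UNIV by blast
      then have "(g \<longlongrightarrow> g 0) (at 0)" by (simp add: isCont_def)
      then show ?thesis by (rule tendsto_mono[OF at_le, rotated]) simp
    qed
    from Lim_in_closed_set[OF cl ev _ this] have "\<phi> (g 0) \<le> ereal c'" by simp
    then show False using c' unfolding g_def by simp
  qed
  have fin: "(\<phi> (v1 + s *\<^sub>R u) - \<phi> v1) / ereal s \<le> ereal Lr" if s: "s > 0" for s
  proof -
    show "(\<phi> (v1 + s *\<^sub>R u) - \<phi> v1) / ereal s \<le> ereal Lr"
    proof (cases "\<phi> (v1 + s *\<^sub>R u)")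
      case (real b)
      then have "b - a1 \<le> s * Lr" using bnd1[OF s] by simp
      then have "(b - a1) / s \<le> Lr" using s by (simp add: field_simps)
      then show ?thesis using real v1 s by simp
    next
      case PInf then show ?thesis using bnd1[OF s] by simp
    next
      case MInf then show ?thesis using Gamma_nm[OF G] by simp
    qed
  qed
  have "Q \<phi> v1 u \<le> ereal Lr" unfolding Q_def by (rule SUP_least) (use fin in simp)
  then show ?thesis using Lr by simp
qed

lemma rec_eq_Q:
  fixes \<phi> :: "'a::{real_vector,t2_space} \<Rightarrow> ereal"
  assumes L: "lcs TYPE('a)" and G: "\<phi> \<in> Gamma" and v: "\<phi> v = ereal a"
  shows "recession \<phi> u = Q \<phi> v u"
proof -
  define v0 where "v0 = (SOME v0. v0 \<in> edom \<phi>)"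
  have "v \<in> edom \<phi>" unfolding edom_def using v by simp
  then have "v0 \<in> edom \<phi>" unfolding v0_def by (rule someI)
  then have "\<phi> v0 < \<infinity>" unfolding edom_def by simp
  then obtain a0 where a0: "\<phi> v0 = ereal a0" using Gamma_nm[OF G] by (cases "\<phi> v0") auto
  have "recession \<phi> u = Lim at_top (\<lambda>t. (\<phi> (v0 + t *\<^sub>R u) - \<phi> v0) / ereal t)"
    unfolding recession_def v0_def Let_def ..
  also have "\<dots> = Q \<phi> v0 u" unfolding Q_def
    by (rule Lim_mono_SUP) (rule quot_mono[OF G a0])
  also have "\<dots> = Q \<phi> v u" using rec_base[OF L G a0 v] rec_base[OF L G v a0] by (rule antisym[rotated])
  finally show ?thesis .
qed

lemma Q_zero: "\<phi> v = ereal a \<Longrightarrow> Q \<phi> v 0 = 0"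
  unfolding Q_def by (simp add: zero_ereal_def)

lemma Q_minorant:
  assumes b: "\<forall>y. ereal (b y - \<beta>) \<le> \<phi> y" and bl: "linear b" and v: "\<phi> v = ereal a"
  shows "ereal (b u) \<le> Q \<phi> v u"
proof (rule ereal_le_epsilon2)
  fix e :: real assume e: "0 < e"
  define K where "K = b v - \<beta> - a"
  have K: "K \<le> 0" using b[rule_format, of v] v unfolding K_def by simp
  define t where "t = (-K)/e + 1"
  have t: "t > 0" unfolding t_def using K e by (simp add: add_nonneg_pos)
  have Kt: "K / t \<ge> -e"
  proof -
    have "-K < e * t" unfolding t_def using e by (simp add: field_simps)
    then show ?thesis using t by (simp add: field_simps)
  qed
  have "ereal (b u + K / t) \<le> (\<phi> (v + t *\<^sub>R u) - \<phi> v) / ereal t"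
  proof (cases "\<phi> (v + t *\<^sub>R u)")
    case (real c)
    have "b (v + t *\<^sub>R u) - \<beta> \<le> c" using b[rule_format, of "v + t *\<^sub>R u"] real by simp
    then have "t * b u + K \<le> c - a" unfolding K_def using bl by (simp add: linear_add linear_scale)
    then have "(t * b u + K) / t \<le> (c - a) / t" using t by (intro divide_right_mono) auto
    then have "b u + K / t \<le> (c - a) / t" using t by (simp add: field_simps)
    then show ?thesis using real v t by simp
  qed (use t v b[rule_format, of "v + t *\<^sub>R u"] in auto)
  also have "\<dots> \<le> Q \<phi> v u" unfolding Q_def by (rule SUP_upper) (use t in auto)
  finally have "ereal (b u + K / t) \<le> Q \<phi> v u" .
  moreover have "ereal (b u) \<le> ereal (b u + K / t) + ereal e" using Kt by simp
  ultimately show "ereal (b u) \<le> Q \<phi> v u + ereal e" by (meson add_right_mono order_trans)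
qed


instantiation "fun" :: (type, real_vector) real_vector
begin
definition scaleR_fun :: "real \<Rightarrow> ('a \<Rightarrow> 'b) \<Rightarrow> 'a \<Rightarrow> 'b" where
  "scaleR_fun c f = (\<lambda>x. c *\<^sub>R f x)"
instance by standard (auto simp: scaleR_fun_def plus_fun_def fun_eq_iff scaleR_add_right scaleR_add_left)
end

lemma eval_linear: "linear (\<lambda>g::'a \<Rightarrow> real. g x)"
  by (rule linearI) (simp_all add: plus_fun_def scaleR_fun_def)

lemma wsep:
  fixes K :: "('a::{real_vector,topological_space} \<Rightarrow> real) set"
  assumes Kc: "convex K" and Klin: "\<And>k. k \<in> K \<Longrightarrow> linear k" and wd: "w \<in> dual"
    and nw: "w \<notin> wclosure K"
  shows "\<exists>u \<delta>. \<delta> > 0 \<and> (\<forall>k\<in>K. k u + \<delta> \<le> w u)"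
proof (cases "K = {}")
  case True then show ?thesis by (intro exI[of _ 0] exI[of _ 1]) auto
next
  case False
  then obtain k0 where k0: "k0 \<in> K" by blast
  have wl: "linear w" using wd unfolding dual_def by simp
  from nw wd obtain F e where Fe: "finite F" "e > 0" "\<not> (\<exists>b\<in>K. \<forall>x\<in>F. \<bar>b x - w x\<bar> < e)"
    unfolding wclosure_def by blast
  define U where "U = (\<Inter>x\<in>F. (\<lambda>g::'a \<Rightarrow> real. g x) -` {-e<..<e})"
  have Uc: "convex U" unfolding U_def
    by (intro convex_INT ballI convex_linear_vimage eval_linear) (simp add: convex_real_interval)
  have U0: "0 \<in> U" unfolding U_def using Fe(2) by auto
  have Uab: "\<exists>c>0. c *\<^sub>R g \<in> U" for g
  proof -
    define M where "M = (\<Sum>x\<in>F. \<bar>g x\<bar>)"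
    have M: "\<bar>g x\<bar> \<le> M" if "x \<in> F" for x
      unfolding M_def using that Fe(1) by (intro member_le_sum) auto
    have M0: "M \<ge> 0" unfolding M_def by (intro sum_nonneg) auto
    define c where "c = e / (M + 1)"
    have c: "c > 0" unfolding c_def using Fe(2) M0 by simp
    have "\<bar>c * g x\<bar> < e" if "x \<in> F" for x
    proof -
      have "\<bar>c * g x\<bar> = c * \<bar>g x\<bar>" using c by (simp add: abs_mult)
      also have "\<dots> \<le> c * M" using M[OF that] c by (intro mult_left_mono) auto
      also have "\<dots> < c * (M + 1)" using c by simp
      also have "\<dots> = e" unfolding c_def using M0 by simp
      finally show ?thesis .
    qed
    then have "c *\<^sub>R g \<in> U" unfolding U_def by (force simp: scaleR_fun_def abs_less_iff)
    then show ?thesis using c by blast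
  qed
  have z: "w \<noteq> k + u" if "k \<in> K" "u \<in> U" for k u
  proof
    assume "w = k + u"
    then have "\<forall>x\<in>F. \<bar>k x - w x\<bar> < e" using that(2) unfolding U_def by (auto simp: plus_fun_def)
    then show False using Fe(3) that(1) by blast
  qed
  obtain \<phi> :: "('a \<Rightarrow> real) \<Rightarrow> real" and \<delta> where ph: "linear \<phi>" "\<forall>u\<in>U. \<phi> u \<le> 1" "\<delta> > 0"
    "\<And>k. k \<in> K \<Longrightarrow> \<phi> k + \<delta> \<le> \<phi> w"
    using sep_alg[OF Kc k0 Uc U0 Uab z] by blast
  have van: "\<phi> g = 0" if g: "\<forall>x\<in>F. g x = 0" for g
  proof -
    have "c *\<^sub>R g \<in> U" for c unfolding U_def using g Fe(2) by (auto simp: scaleR_fun_def)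
    then have "c * \<phi> g \<le> 1" for c using ph(1,2) by (metis linear_scale real_scaleR_def)
    from this[of "2 / \<phi> g"] this[of "- 2 / \<phi> g"] show ?thesis
      by (cases "\<phi> g = 0") auto
  qed
  define dlt where "dlt x = (\<lambda>y::'a. if y = x then (1::real) else 0)" for x
  define u where "u = (\<Sum>x\<in>F. \<phi> (dlt x) *\<^sub>R x)"
  have rep: "\<phi> k = k u" if kl: "linear k" for k
  proof -
    define s where "s = (\<Sum>x\<in>F. k x *\<^sub>R dlt x)"
    have sy: "s y = (\<Sum>x\<in>F. k x *\<^sub>R dlt x y)" for y
      unfolding s_def using linear_sum[OF eval_linear[of y], of "\<lambda>x. k x *\<^sub>R dlt x" F]
      by (simp add: scaleR_fun_def)
    have "\<forall>y\<in>F. (k - s) y = 0"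
    proof
      fix y assume y: "y \<in> F"
      have "s y = (\<Sum>x\<in>F. if y = x then k x else 0)" unfolding sy dlt_def by (intro sum.cong) auto
      also have "\<dots> = k y" using y Fe(1) by simp
      finally show "(k - s) y = 0" by simp
    qed
    then have "\<phi> (k - s) = 0" by (rule van)
    then have "\<phi> k = \<phi> s" using ph(1) by (simp add: linear_diff)
    also have "\<phi> s = (\<Sum>x\<in>F. k x * \<phi> (dlt x))" unfolding s_def using ph(1)
      by (simp add: linear_sum linear_scale)
    also have "\<dots> = k u" unfolding u_def using kl by (simp add: linear_sum linear_scale mult.commute)
    finally show ?thesis .
  qed
  have "\<forall>k\<in>K. k u + \<delta> \<le> w u" using ph(4) rep Klin wl by metis
  then show ?thesis using ph(3) by blast
qed


lemma ereal_cancel_le: "X + ereal c \<le> ereal c \<longleftrightarrow> X \<le> 0"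
  by (cases X) auto

lemma ereal_cancel_ge: "ereal c \<le> X + ereal c \<longleftrightarrow> 0 \<le> X"
  by (cases X) auto

context
  fixes A :: "'a::{real_vector,t2_space} \<Rightarrow> 'b::{real_vector,t2_space}"
    and h :: "'b \<Rightarrow> ereal" and xs :: "'a \<Rightarrow> real" and f :: "'a \<Rightarrow> ereal"
  assumes X: "lcs TYPE('a)" and Y: "lcs TYPE('b)" and Al: "linear A"
    and h: "h \<in> Gamma" and xs: "xs \<in> dual"
    and f_def: "f = (\<lambda>x. h (A x) + ereal (xs x))" and f: "f \<in> Gamma"
begin

lemma xsl: "linear xs" using xs unfolding dual_def by simp

definition "x0 = (SOME x. \<exists>a. f x = ereal a)"
definition "a0 = real_of_ereal (f x0)"

lemma x0: "f x0 = ereal a0"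
proof -
  have "\<exists>x a. f x = ereal a" using Gamma_dom[OF f] by blast
  then have "\<exists>a. f x0 = ereal a" unfolding x0_def by (rule someI_ex)
  then show ?thesis unfolding a0_def by auto
qed

lemma hy0: "h (A x0) = ereal (a0 - xs x0)"
proof -
  have "h (A x0) + ereal (xs x0) = ereal a0" using x0 unfolding f_def by simp
  then show ?thesis by (cases "h (A x0)") auto
qed

lemma recf: "recession f u = Q f x0 u" by (rule rec_eq_Q[OF X f x0])
lemma rech: "recession h y = Q h (A x0) y" by (rule rec_eq_Q[OF Y h hy0])

lemma rec_h0: "recession h 0 = 0" unfolding rech by (rule Q_zero[of h "A x0", OF hy0])
lemma rec_f0: "recession f 0 = 0" unfolding recf by (rule Q_zero[of f x0, OF x0])

lemma part_a1: "recession f u = recession h (A u) + ereal (xs u)"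
proof -
  have eq: "(f (x0 + t *\<^sub>R u) - f x0) / ereal t = (h (A x0 + t *\<^sub>R A u) - h (A x0)) / ereal t + ereal (xs u)"
    if t: "t \<in> {0<..}" for t
  proof -
    have t: "t > 0" using t by simp
    have fx: "f (x0 + t *\<^sub>R u) = h (A x0 + t *\<^sub>R A u) + ereal (xs x0 + t * xs u)"
      unfolding f_def using Al xsl by (simp add: linear_add linear_scale)
    show ?thesis
    proof (cases "h (A x0 + t *\<^sub>R A u)")
      case (real c)
      have "(c + (xs x0 + t * xs u) - a0) / t = (c - (a0 - xs x0)) / t + xs u" using t
        by (simp add: field_simps)
      then show ?thesis using fx real x0 hy0 t by simp
    next
      case PInf then show ?thesis using fx x0 hy0 t by simp
    next
      case MInf then show ?thesis using Gamma_nm[OF h] by simp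
    qed
  qed
  have "Q f x0 u = (SUP t\<in>{0<..}. (h (A x0 + t *\<^sub>R A u) - h (A x0)) / ereal t + ereal (xs u))"
    unfolding Q_def using eq by (intro SUP_cong) auto
  also have "\<dots> = Q h (A x0) (A u) + ereal (xs u)"
    unfolding Q_def by (rule SUP_ereal_add_left) auto
  finally show ?thesis unfolding recf rech .
qed

lemma part_a: "recession f = (\<lambda>x. recession h (A x) + ereal (xs x))"
  using part_a1 by auto

lemma part_a2: "A x = 0 \<Longrightarrow> recession f x = ereal (xs x)"
  using part_a1 rec_h0 by simp

definition "S0 = {vs \<in> dual. \<forall>u. ereal (vs u) \<le> recession f u}"

lemma Sub_eq: "subdiff (recession f) 0 = S0"
  unfolding subdiff_def rec_f0 S0_def by simp

lemma conj_fin: assumes "b \<in> conj_dom f" shows "\<exists>\<beta>. conj f b = ereal \<beta>"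
proof -
  have "conj f b < \<infinity>" using assms unfolding conj_dom_def by simp
  moreover have "ereal (b x0) - f x0 \<le> conj f b" unfolding conj_def by (rule SUP_upper) simp
  then have "conj f b \<noteq> -\<infinity>" using x0 by auto
  ultimately show ?thesis by (cases "conj f b") auto
qed

lemma conj_minor: assumes "conj f b = ereal \<beta>" shows "ereal (b y - \<beta>) \<le> f y"
proof -
  have le: "ereal (b y) - f y \<le> ereal \<beta>" unfolding assms[symmetric] conj_def by (rule SUP_upper) simp
  show ?thesis
  proof (cases "f y")
    case (real c) then show ?thesis using le by simp
  next
    case PInf then show ?thesis by simp
  next
    case MInf then show ?thesis using Gamma_nm[OF f] by simp
  qed
qed

lemma minor_conj: assumes "\<And>y. ereal (b y - \<beta>) \<le> f y" shows "conj f b \<le> ereal \<beta>"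
  unfolding conj_def
proof (rule SUP_least)
  fix y
  show "ereal (b y) - f y \<le> ereal \<beta>"
  proof (cases "f y")
    case (real c) then show ?thesis using assms[of y] by simp
  next
    case PInf then show ?thesis by simp
  next
    case MInf then show ?thesis using Gamma_nm[OF f] by simp
  qed
qed

lemma Cle: assumes b: "b \<in> conj_dom f" shows "ereal (b u) \<le> recession f u"
proof -
  obtain \<beta> where be: "conj f b = ereal \<beta>" using conj_fin[OF b] by blast
  have bl: "linear b" using b unfolding conj_dom_def dual_def by simp
  have mn: "\<forall>y. ereal (b y - \<beta>) \<le> f y" using conj_minor[OF be] by blast
  show ?thesis unfolding recf by (rule Q_minorant[OF mn bl x0])
qed

lemma rec_le: assumes H: "\<And>b. b \<in> conj_dom f \<Longrightarrow> b u \<le> L" shows "recession f u \<le> ereal L"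
  unfolding recf Q_def
proof (rule SUP_least)
  fix t :: real assume "t \<in> {0<..}"
  then have t: "t > 0" by simp
  have bnd: "f (x0 + t *\<^sub>R u) \<le> ereal (a0 + t * L)"
  proof (rule ccontr)
    assume "\<not> ?thesis"
    then have "ereal (a0 + t * L) < f (x0 + t *\<^sub>R u)" by simp
    from FM[OF X f this] obtain b \<beta> where bb: "b \<in> dual" "\<forall>y. ereal (b y - \<beta>) \<le> f y"
      "a0 + t * L < b (x0 + t *\<^sub>R u) - \<beta>" by blast
    have "conj f b \<le> ereal \<beta>" using bb(2) by (intro minor_conj) blast
    then have "conj f b < \<infinity>" by (rule le_less_trans) simp
    then have bC: "b \<in> conj_dom f" unfolding conj_dom_def using bb(1) by simp
    have "b u \<le> L" using H[OF bC] .
    then have "t * b u \<le> t * L" using t by simp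
    moreover have "b x0 - \<beta> \<le> a0" using bb(2)[rule_format, of x0] x0 by simp
    moreover have "b (x0 + t *\<^sub>R u) = b x0 + t * b u" using bb(1) unfolding dual_def
      by (simp add: linear_add linear_scale)
    ultimately show False using bb(3) by linarith
  qed
  show "(f (x0 + t *\<^sub>R u) - f x0) / ereal t \<le> ereal L"
  proof (cases "f (x0 + t *\<^sub>R u)")
    case (real c)
    then have "c - a0 \<le> t * L" using bnd by simp
    then have "(c - a0) / t \<le> L" using t by (simp add: field_simps)
    then show ?thesis using real x0 t by simp
  next
    case PInf then show ?thesis using bnd by simp
  next
    case MInf then show ?thesis using Gamma_nm[OF f] by simp
  qed
qed

lemma lin_comb_fun: "(a *\<^sub>R b1 + c *\<^sub>R b2) = (\<lambda>y. a * b1 y + c * b2 (y::'a))"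
  by (simp add: fun_eq_iff plus_fun_def scaleR_fun_def)

lemma C_convex: "convex (conj_dom f)"
  unfolding convex_def
proof (intro ballI allI impI)
  fix b1 b2 and a c :: real assume b: "b1 \<in> conj_dom f" "b2 \<in> conj_dom f" and ac: "0 \<le> a" "0 \<le> c" "a + c = 1"
  obtain \<beta>1 \<beta>2 where be: "conj f b1 = ereal \<beta>1" "conj f b2 = ereal \<beta>2" using conj_fin b by blast
  have d: "(\<lambda>y. a * b1 y + c * b2 y) \<in> dual"
    using b unfolding conj_dom_def by (intro dual_add dual_scale) auto
  have "conj f (\<lambda>y. a * b1 y + c * b2 y) \<le> ereal (a * \<beta>1 + c * \<beta>2)"
  proof (rule minor_conj)
    fix y
    show "ereal (a * b1 y + c * b2 y - (a * \<beta>1 + c * \<beta>2)) \<le> f y"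
    proof (cases "f y")
      case (real r)
      have "b1 y - \<beta>1 \<le> r" "b2 y - \<beta>2 \<le> r" using conj_minor[OF be(1), of y] conj_minor[OF be(2), of y] real by auto
      then have "a * (b1 y - \<beta>1) \<le> a * r" "c * (b2 y - \<beta>2) \<le> c * r" using ac by (auto intro: mult_left_mono)
      then have "a * b1 y + c * b2 y - (a * \<beta>1 + c * \<beta>2) \<le> (a + c) * r" by (simp add: algebra_simps)
      then show ?thesis using real ac by simp
    next
      case PInf then show ?thesis by simp
    next
      case MInf then show ?thesis using Gamma_nm[OF f] by simp
    qed
  qed
  then have "conj f (\<lambda>y. a * b1 y + c * b2 y) < \<infinity>" by (rule le_less_trans) simp
  then show "a *\<^sub>R b1 + c *\<^sub>R b2 \<in> conj_dom f" unfolding lin_comb_fun conj_dom_def using d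
    by simp
qed

lemma wcl_sub: "wclosure (conj_dom f) \<subseteq> S0"
proof
  fix b assume b: "b \<in> wclosure (conj_dom f)"
  have bd: "b \<in> dual" using b unfolding wclosure_def by simp
  have "ereal (b u) \<le> recession f u" for u
  proof (rule ereal_le_epsilon2)
    fix e :: real assume e: "0 < e"
    have "\<exists>c\<in>conj_dom f. \<forall>x\<in>{u}. \<bar>c x - b x\<bar> < e" using b e unfolding wclosure_def by blast
    then obtain c where c: "c \<in> conj_dom f" "\<bar>c u - b u\<bar> < e" by blast
    have "ereal (b u) \<le> ereal (c u) + ereal e" using c(2) by simp
    also have "\<dots> \<le> recession f u + ereal e" using Cle[OF c(1)] by (rule add_right_mono)
    finally show "ereal (b u) \<le> recession f u + ereal e" .
  qed
  then show "b \<in> S0" unfolding S0_def using bd by simp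
qed

lemma sub_wcl: "S0 \<subseteq> wclosure (conj_dom f)"
proof
  fix vs assume vs: "vs \<in> S0"
  show "vs \<in> wclosure (conj_dom f)"
  proof (rule ccontr)
    assume nw: "vs \<notin> wclosure (conj_dom f)"
    have vd: "vs \<in> dual" using vs unfolding S0_def by simp
    obtain u \<delta> where ud: "\<delta> > 0" "\<forall>k\<in>conj_dom f. k u + \<delta> \<le> vs u"
      using wsep[OF C_convex _ vd nw] unfolding conj_dom_def dual_def by blast
    have "recession f u \<le> ereal (vs u - \<delta>)" by (rule rec_le) (use ud in force)
    moreover have "ereal (vs u) \<le> recession f u" using vs unfolding S0_def by simp
    ultimately have "ereal (vs u) \<le> ereal (vs u - \<delta>)" by (rule order_trans[rotated])
    then show False using ud(1) by simp
  qed
qed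

lemma part_b1: "subdiff (recession f) 0 = wclosure (conj_dom f)"
  using Sub_eq wcl_sub sub_wcl by blast

lemma part_b2: "(\<forall>y. recession h y \<ge> 0) \<Longrightarrow> xs \<in> subdiff (recession f) 0"
  unfolding Sub_eq unfolding S0_def part_a using xs ereal_cancel_ge by simp

lemma part_b3: "range A = UNIV \<Longrightarrow> xs \<in> subdiff (recession f) 0 \<Longrightarrow> recession h y \<ge> 0"
proof -
  assume r: "range A = UNIV" and x: "xs \<in> subdiff (recession f) 0"
  have "y \<in> range A" using r by simp
  then obtain u where u: "y = A u" by blast
  have "ereal (xs u) \<le> recession h (A u) + ereal (xs u)" using x unfolding Sub_eq unfolding S0_def part_a by simp
  then show ?thesis using u ereal_cancel_ge by simp
qed

lemma part_c1a:
  assumes H: "{y. recession h y \<le> 0} = {0}"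
  shows "{x. A x = 0} = {u. recession f u \<le> ereal (xs u)}"
proof -
  have H': "recession h y \<le> 0 \<longleftrightarrow> y = 0" for y using H by blast
  show ?thesis using H' by (auto simp: part_a1 ereal_cancel_le)
qed

lemma S0_eq: "wclosure (conj_dom f) = S0" using part_b1 Sub_eq by simp

lemma S0_conv:
  assumes c: "c1 \<in> S0" "c2 \<in> S0" and l: "0 \<le> l" "0 \<le> m" "l + m = 1"
  shows "(\<lambda>x. l * c1 x + m * c2 x) \<in> S0"
proof -
  have d: "(\<lambda>x. l * c1 x + m * c2 x) \<in> dual" using c unfolding S0_def by (intro dual_add dual_scale) auto
  have s1: "\<forall>v. ereal (c1 v) \<le> recession f v" "\<forall>v. ereal (c2 v) \<le> recession f v"
    using c unfolding S0_def by auto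
  have "ereal (l * c1 u + m * c2 u) \<le> recession f u" for u
  proof (cases "recession f u")
    case (real r)
    have "c1 u \<le> r" "c2 u \<le> r" using s1(1)[rule_format, of u] s1(2)[rule_format, of u] real by auto
    then have "l * c1 u \<le> l * r" "m * c2 u \<le> m * r" using l by (auto intro: mult_left_mono)
    then have "l * c1 u + m * c2 u \<le> (l + m) * r" by (simp add: algebra_simps)
    then show ?thesis using real l by simp
  next
    case PInf then show ?thesis by simp
  next
    case MInf then show ?thesis using s1(1)[rule_format, of u] by simp
  qed
  then show ?thesis using d unfolding S0_def by simp
qed

lemma keyS0: assumes c: "c \<in> S0" and u: "A u = 0" shows "c u = xs u"
proof -
  have cl: "linear c" using c unfolding S0_def dual_def by simp
  have s1: "\<forall>v. ereal (c v) \<le> recession f v" using c unfolding S0_def by auto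
  have "ereal (c u) \<le> ereal (xs u)" using s1[rule_format, of u] part_a2[OF u] by simp
  moreover have "A (-u) = 0" using u Al by (simp add: linear_neg)
  then have "ereal (c (-u)) \<le> ereal (xs (-u))" using s1[rule_format, of "-u"] part_a2 by simp
  ultimately show ?thesis using cl xsl by (simp add: linear_neg)
qed

definition "Cone = {(\<lambda>x. t * (c x - xs x)) | t c. t \<ge> 0 \<and> c \<in> S0}"
definition "Perp = {w \<in> dual. \<forall>u. A u = 0 \<longrightarrow> w u = 0}"

lemma xsS0: assumes "\<forall>y. recession h y \<ge> 0" shows "xs \<in> S0"
  using part_b2[OF assms] Sub_eq by simp

lemma cone_perp: "wclosure Cone \<subseteq> Perp"
proof
  fix w assume w: "w \<in> wclosure Cone"
  have "w u = 0" if u: "A u = 0" for u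
  proof (rule ccontr)
    assume nz: "w u \<noteq> 0"
    have "\<forall>F e. finite F \<and> 0 < e \<longrightarrow> (\<exists>b\<in>Cone. \<forall>x\<in>F. \<bar>b x - w x\<bar> < e)"
      using w unfolding wclosure_def by simp
    from this[rule_format, of "{u}" "\<bar>w u\<bar>"] have "\<exists>k\<in>Cone. \<forall>x\<in>{u}. \<bar>k x - w x\<bar> < \<bar>w u\<bar>"
      using nz by simp
    then obtain t c where "c \<in> S0" "\<bar>t * (c u - xs u) - w u\<bar> < \<bar>w u\<bar>" unfolding Cone_def by auto
    then show False using keyS0 u by simp
  qed
  then show "w \<in> Perp" using w unfolding Perp_def wclosure_def by simp
qed

lemma cone_lin: "k \<in> Cone \<Longrightarrow> linear k"
proof -
  assume "k \<in> Cone"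
  then obtain t c where k: "k = (\<lambda>x. t * (c x - xs x))" "c \<in> S0" unfolding Cone_def by blast
  have "linear c" using k(2) unfolding S0_def dual_def by simp
  then show "linear k" unfolding k(1) using xsl unfolding linear_iff by (simp add: algebra_simps)
qed

lemma cone_convex: assumes xs0: "xs \<in> S0" shows "convex Cone"
  unfolding convex_def
proof (intro ballI allI impI)
  fix p q and a b :: real assume pq: "p \<in> Cone" "q \<in> Cone" and ab: "0 \<le> a" "0 \<le> b" "a + b = 1"
  obtain t1 c1 where p: "p = (\<lambda>x. t1 * (c1 x - xs x))" "t1 \<ge> 0" "c1 \<in> S0" using pq(1) unfolding Cone_def by blast
  obtain t2 c2 where q: "q = (\<lambda>x. t2 * (c2 x - xs x))" "t2 \<ge> 0" "c2 \<in> S0" using pq(2) unfolding Cone_def by blast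
  have eq: "a *\<^sub>R p + b *\<^sub>R q = (\<lambda>x. (a * t1) * (c1 x - xs x) + (b * t2) * (c2 x - xs x))"
    unfolding lin_comb_fun p q by (simp add: algebra_simps)
  define T where "T = a * t1 + b * t2"
  have a1: "a * t1 \<ge> 0" "b * t2 \<ge> 0" using ab p q by auto
  show "a *\<^sub>R p + b *\<^sub>R q \<in> Cone"
  proof (cases "T = 0")
    case True
    then have "a * t1 = 0" "b * t2 = 0" using a1 unfolding T_def by linarith+
    then have "a *\<^sub>R p + b *\<^sub>R q = (\<lambda>x. 0 * (xs x - xs x))" unfolding eq
      by (simp only: mult_zero_left add_0_left)
    then show ?thesis unfolding Cone_def using xs0 by blast
  next
    case False
    then have T: "T > 0" using a1 unfolding T_def by linarith
    define c where "c = (\<lambda>x. (a * t1 / T) * c1 x + (b * t2 / T) * c2 x)"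
    have "c \<in> S0" unfolding c_def
      by (rule S0_conv[OF p(3) q(3)]) (use a1 T in \<open>auto simp: T_def add_divide_distrib[symmetric]\<close>)
    moreover have "a *\<^sub>R p + b *\<^sub>R q = (\<lambda>x. T * (c x - xs x))"
      unfolding eq c_def
    proof (rule ext)
      fix x
      have e1: "T * (a*t1/T) = a*t1" "T * (b*t2/T) = b*t2" using T by auto
      have "T * ((a*t1/T) * c1 x + (b*t2/T) * c2 x - xs x)
          = (T * (a*t1/T)) * c1 x + (T*(b*t2/T)) * c2 x - T * xs x" by (simp add: algebra_simps)
      also have "\<dots> = (a*t1) * c1 x + (b*t2) * c2 x - T * xs x" by (simp only: e1)
      also have "\<dots> = (a*t1) * (c1 x - xs x) + (b*t2) * (c2 x - xs x)" unfolding T_def by (simp add: algebra_simps)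
      finally have "T * ((a*t1/T) * c1 x + (b*t2/T) * c2 x - xs x) = (a*t1) * (c1 x - xs x) + (b*t2) * (c2 x - xs x)" .
      then show "(a * t1) * (c1 x - xs x) + (b * t2) * (c2 x - xs x) = T * ((a*t1/T) * c1 x + (b*t2/T) * c2 x - xs x)"
        by (rule sym)
    qed
    ultimately show ?thesis unfolding Cone_def using T by force
  qed
qed

lemma perp_cone:
  assumes H: "{y. recession h y \<le> 0} = {0}" and xs0: "xs \<in> S0"
  shows "Perp \<subseteq> wclosure Cone"
proof
  fix w assume w: "w \<in> Perp"
  show "w \<in> wclosure Cone"
  proof (rule ccontr)
    assume nw: "w \<notin> wclosure Cone"
    have wd: "w \<in> dual" using w unfolding Perp_def by simp
    obtain u \<delta> where ud: "\<delta> > 0" "\<And>k. k \<in> Cone \<Longrightarrow> k u + \<delta> \<le> w u"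
      using wsep[OF cone_convex[OF xs0] cone_lin wd nw] by blast
    have "(\<lambda>x. 0 * (xs x - xs x)) \<in> Cone" unfolding Cone_def using xs0 by blast
    from ud(2)[OF this] have wpos: "w u \<ge> \<delta>" by simp
    have cle: "c u \<le> xs u" if c: "c \<in> S0" for c
    proof (rule ccontr)
      assume "\<not> ?thesis"
      then have d: "c u - xs u > 0" by simp
      define t where "t = w u / (c u - xs u)"
      have t: "t \<ge> 0" unfolding t_def using d wpos ud(1) by simp
      have "(\<lambda>x. t * (c x - xs x)) \<in> Cone" unfolding Cone_def using t c by blast
      from ud(2)[OF this] have "t * (c u - xs u) + \<delta> \<le> w u" by simp
      moreover have "t * (c u - xs u) = w u" unfolding t_def using d by simp
      ultimately show False using ud(1) by simp
    qed
    have "recession f u \<le> ereal (xs u)"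
    proof (rule rec_le)
      fix b assume b: "b \<in> conj_dom f"
      have "b \<in> S0" unfolding S0_def using b Cle unfolding conj_dom_def by auto
      then show "b u \<le> xs u" by (rule cle)
    qed
    then have "A u = 0" using part_c1a[OF H] by blast
    then have "w u = 0" using w unfolding Perp_def by simp
    then show False using wpos ud(1) by simp
  qed
qed

lemma dual_zero: "(\<lambda>x. 0) \<in> dual"
  unfolding dual_def by (simp add: linear_zero continuous_on_const)

lemma perp_sub: "lin_subspace Perp"
  unfolding lin_subspace_def Perp_def
  by (auto intro!: dual_add dual_scale dual_zero)

lemma part_c1b:
  assumes H: "{y. recession h y \<le> 0} = {0}"
  shows "xs \<in> qri (wclosure (conj_dom f))"
proof -
  have H': "recession h y \<le> 0 \<longleftrightarrow> y = 0" for y using H by blast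
  have hpos: "\<forall>y. recession h y \<ge> 0"
  proof
    fix y show "recession h y \<ge> 0"
    proof (cases "recession h y \<le> 0")
      case True then have "y = 0" using H' by simp
      then show ?thesis using rec_h0 by simp
    next
      case False then show ?thesis by simp
    qed
  qed
  have xs0: "xs \<in> S0" by (rule xsS0[OF hpos])
  have "wclosure Cone = Perp" using cone_perp perp_cone[OF H xs0] by blast
  then have "lin_subspace (wclosure Cone)" using perp_sub by simp
  then show ?thesis unfolding S0_eq qri_def Cone_def using xs0 by simp
qed

lemma part_c2:
  assumes r: "range A = UNIV" and K: "{x. A x = 0} = {u. recession f u \<le> ereal (xs u)}"
  shows "{y. recession h y \<le> 0} = {0}"
proof -
  have "y = 0" if y: "recession h y \<le> 0" for y
  proof -
    have "y \<in> range A" using r by simp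
    then obtain u where u: "y = A u" by blast
    have "recession f u \<le> ereal (xs u)" using y u by (simp add: part_a1 ereal_cancel_le)
    then have "A u = 0" using K by blast
    then show ?thesis using u by simp
  qed
  then show ?thesis using rec_h0 by auto
qed

lemma part_d1:
  assumes c: "\<forall>y. ereal c \<le> h y"
  shows "(\<forall>y. recession h y \<ge> 0) \<and> xs \<in> conj_dom f"
proof
  show "\<forall>y. recession h y \<ge> 0"
  proof
    fix y
    have "\<forall>z. ereal ((\<lambda>_. 0) z - (-c)) \<le> h z" using c by simp
    from Q_minorant[OF this linear_zero hy0, of y] show "recession h y \<ge> 0" unfolding rech by (simp add: zero_ereal_def)
  qed
  have "conj f xs \<le> ereal (-c)"
  proof (rule minor_conj)
    fix y show "ereal (xs y - - c) \<le> f y"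
      unfolding f_def using c[rule_format, of "A y"] by (cases "h (A y)") auto
  qed
  then have "conj f xs < \<infinity>" by (rule le_less_trans) simp
  then show "xs \<in> conj_dom f" unfolding conj_dom_def using xs by simp
qed

lemma conj_xs: assumes r: "range A = UNIV" shows "conj f xs = - (INF y. h y)"
proof -
  have "conj f xs = (SUP x. - h (A x))" unfolding conj_def f_def
  proof (intro SUP_cong refl)
    fix x show "ereal (xs x) - (h (A x) + ereal (xs x)) = - h (A x)"
      using Gamma_nm[OF h, of "A x"] by (cases "h (A x)") auto
  qed
  also have "\<dots> = - (INF x. h (A x))" by (rule ereal_SUP_uminus_eq)
  also have "(INF x. h (A x)) = (INF y. h y)" using r by (metis image_image)
  finally show ?thesis .
qed

lemma part_d2:
  assumes r: "range A = UNIV"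
  shows "(INF y. h y) = - conj f xs \<and> ((\<exists>c::real. \<forall>y. ereal c \<le> h y) \<longleftrightarrow> xs \<in> conj_dom f)"
proof
  show I: "(INF y. h y) = - conj f xs" using conj_xs[OF r] by simp
  show "(\<exists>c::real. \<forall>y. ereal c \<le> h y) \<longleftrightarrow> xs \<in> conj_dom f"
  proof
    assume "\<exists>c::real. \<forall>y. ereal c \<le> h y" then show "xs \<in> conj_dom f" using part_d1 by blast
  next
    assume "xs \<in> conj_dom f"
    then have "conj f xs < \<infinity>" unfolding conj_dom_def by simp
    then have "(INF y. h y) \<noteq> -\<infinity>" using I by auto
    moreover obtain y1 c1 where "h y1 = ereal c1" using Gamma_dom[OF h] by blast
    then have "(INF y. h y) \<le> ereal c1" using INF_lower[of y1 UNIV h] by simp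
    then have "(INF y. h y) \<noteq> \<infinity>" by auto
    ultimately obtain c where c: "(INF y. h y) = ereal c" by (cases "INF y. h y") auto
    have "\<forall>y. ereal c \<le> h y" using c by (metis INF_lower UNIV_I)
    then show "\<exists>c::real. \<forall>y. ereal c \<le> h y" by blast
  qed
qed

lemma part_e:
  assumes r: "range A = UNIV"
  shows "(\<exists>y. h y = (INF z. h z)) \<longleftrightarrow> xs \<in> Im_subdiff f"
proof
  assume "\<exists>y. h y = (INF z. h z)"
  then obtain y where y: "h y = (INF z. h z)" by blast
  have "y \<in> range A" using r by simp
  then obtain x where x: "y = A x" by blast
  obtain y1 c1 where y1: "h y1 = ereal c1" using Gamma_dom[OF h] by blast
  have "h y \<le> h y1" unfolding y by (rule INF_lower) simp
  then have "h y \<noteq> \<infinity>" using y1 by auto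
  then obtain a where a: "h y = ereal a" using Gamma_nm[OF h, of y] by (cases "h y") auto
  have hmin: "h y \<le> h z" for z unfolding y by (rule INF_lower) simp
  have fx: "f x = ereal (a + xs x)" unfolding f_def using a x by simp
  have "ereal (xs (v' - x)) \<le> f v' - f x" for v'
  proof (cases "h (A v')")
    case (real c)
    have "a \<le> c" using hmin[of "A v'"] real a by simp
    then show ?thesis unfolding fx unfolding f_def using real xsl by (simp add: linear_diff)
  next
    case PInf then show ?thesis unfolding fx unfolding f_def by simp
  next
    case MInf then show ?thesis using Gamma_nm[OF h] by simp
  qed
  then have "xs \<in> subdiff f x" unfolding subdiff_def using fx xs by simp
  then show "xs \<in> Im_subdiff f" unfolding Im_subdiff_def by blast
next
  assume "xs \<in> Im_subdiff f"
  then obtain x where x: "xs \<in> subdiff f x" unfolding Im_subdiff_def by blast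
  then have fx: "f x \<noteq> \<infinity>" "f x \<noteq> -\<infinity>" and sd: "\<forall>v'. ereal (xs (v' - x)) \<le> f v' - f x"
    unfolding subdiff_def by (auto split: if_splits)
  obtain a where a: "h (A x) = ereal a" using fx unfolding f_def by (cases "h (A x)") auto
  have "h (A x) \<le> h z" for z
  proof -
    have "z \<in> range A" using r by simp
    then obtain v where v: "z = A v" by blast
    have "ereal (xs (v - x)) \<le> f v - f x" using sd by blast
    then show ?thesis unfolding v f_def using a xsl by (cases "h (A v)") (auto simp: linear_diff)
  qed
  then have "h (A x) = (INF z. h z)" by (intro antisym le_INF_iff[THEN iffD2] INF_lower) auto
  then show "\<exists>y. h y = (INF z. h z)" by blast
qed

end

theorem proposition12:
  fixes A :: "'a::{real_vector,t2_space} \<Rightarrow> 'b::{real_vector,t2_space}"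
    and h :: "'b \<Rightarrow> ereal" and xs :: "'a \<Rightarrow> real" and f :: "'a \<Rightarrow> ereal"
  assumes X: "lcs TYPE('a)" "nontrivial TYPE('a)"
    and Y: "lcs TYPE('b)" "nontrivial TYPE('b)"
    and A: "linear A" "continuous_on UNIV A"
    and h: "h \<in> Gamma"
    and xs: "xs \<in> dual"
    and f_def: "f = (\<lambda>x. h (A x) + ereal (xs x))"
    and f: "f \<in> Gamma"
  shows
    \<comment> \<open>(a)\<close>
    "(recession f = (\<lambda>x. recession h (A x) + ereal (xs x)) \<and>
      {x. A x = 0} \<subseteq> {u. recession f u = ereal (xs u)})
   \<and> \<comment> \<open>(b)\<close>
     (subdiff (recession f) 0 = wclosure (conj_dom f) \<and>
      ((\<forall>y. recession h y \<ge> 0) \<longrightarrow> xs \<in> subdiff (recession f) 0) \<and>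
      (range A = UNIV \<and> xs \<in> subdiff (recession f) 0 \<longrightarrow> (\<forall>y. recession h y \<ge> 0)))
   \<and> \<comment> \<open>(c)\<close>
     (({y. recession h y \<le> 0} = {0} \<longrightarrow>
         {x. A x = 0} = {u. recession f u \<le> ereal (xs u)} \<and>
         xs \<in> qri (wclosure (conj_dom f))) \<and>
      (range A = UNIV \<and> {x. A x = 0} = {u. recession f u \<le> ereal (xs u)} \<longrightarrow>
         {y. recession h y \<le> 0} = {0}))
   \<and> \<comment> \<open>(d)\<close>
     (((\<exists>c::real. \<forall>y. ereal c \<le> h y) \<longrightarrow>
         (\<forall>y. recession h y \<ge> 0) \<and> xs \<in> conj_dom f) \<and>
      (range A = UNIV \<longrightarrow>
         (INF y. h y) = - conj f xs \<and>
         ((\<exists>c::real. \<forall>y. ereal c \<le> h y) \<longleftrightarrow> xs \<in> conj_dom f)))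
   \<and> \<comment> \<open>(e)\<close>
     (range A = UNIV \<longrightarrow> ((\<exists>y. h y = (INF z. h z)) \<longleftrightarrow> xs \<in> Im_subdiff f))"
proof -
  note ctx = X(1) Y(1) A(1) h xs f_def f
  have Pa: "recession f = (\<lambda>x. recession h (A x) + ereal (xs x))" by (rule part_a[OF ctx])
  have Pa2: "{x. A x = 0} \<subseteq> {u. recession f u = ereal (xs u)}"
  proof
    fix x assume "x \<in> {x. A x = 0}"
    then have "A x = 0" by simp
    then show "x \<in> {u. recession f u = ereal (xs u)}" using part_a2[OF ctx] by simp
  qed
  have Pb1: "subdiff (recession f) 0 = wclosure (conj_dom f)" by (rule part_b1[OF ctx])
  have Pb2: "(\<forall>y. recession h y \<ge> 0) \<longrightarrow> xs \<in> subdiff (recession f) 0"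
  proof
    assume H: "\<forall>y. recession h y \<ge> 0"
    show "xs \<in> subdiff (recession f) 0" by (rule part_b2[OF ctx H])
  qed
  have Pb3: "range A = UNIV \<and> xs \<in> subdiff (recession f) 0 \<longrightarrow> (\<forall>y. recession h y \<ge> 0)"
  proof (intro impI allI)
    fix y assume H: "range A = UNIV \<and> xs \<in> subdiff (recession f) 0"
    show "recession h y \<ge> 0" by (rule part_b3[OF ctx conjunct1[OF H] conjunct2[OF H]])
  qed
  have Pc1: "{y. recession h y \<le> 0} = {0} \<longrightarrow>
         {x. A x = 0} = {u. recession f u \<le> ereal (xs u)} \<and> xs \<in> qri (wclosure (conj_dom f))"
  proof (intro impI conjI)
    assume H: "{y. recession h y \<le> 0} = {0}"
    show "{x. A x = 0} = {u. recession f u \<le> ereal (xs u)}" by (rule part_c1a[OF ctx H])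
    show "xs \<in> qri (wclosure (conj_dom f))" by (rule part_c1b[OF ctx H])
  qed
  have Pc2: "range A = UNIV \<and> {x. A x = 0} = {u. recession f u \<le> ereal (xs u)} \<longrightarrow>
         {y. recession h y \<le> 0} = {0}"
  proof
    assume H: "range A = UNIV \<and> {x. A x = 0} = {u. recession f u \<le> ereal (xs u)}"
    show "{y. recession h y \<le> 0} = {0}" by (rule part_c2[OF ctx conjunct1[OF H] conjunct2[OF H]])
  qed
  have Pd1: "(\<exists>c::real. \<forall>y. ereal c \<le> h y) \<longrightarrow> (\<forall>y. recession h y \<ge> 0) \<and> xs \<in> conj_dom f"
  proof
    assume "\<exists>c::real. \<forall>y. ereal c \<le> h y"
    then obtain c :: real where H: "\<forall>y. ereal c \<le> h y" by blast
    show "(\<forall>y. recession h y \<ge> 0) \<and> xs \<in> conj_dom f" by (rule part_d1[OF ctx H])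
  qed
  have Pd2: "range A = UNIV \<longrightarrow> (INF y. h y) = - conj f xs \<and>
         ((\<exists>c::real. \<forall>y. ereal c \<le> h y) \<longleftrightarrow> xs \<in> conj_dom f)"
  proof
    assume H: "range A = UNIV"
    show "(INF y. h y) = - conj f xs \<and> ((\<exists>c::real. \<forall>y. ereal c \<le> h y) \<longleftrightarrow> xs \<in> conj_dom f)"
      by (rule part_d2[OF ctx H])
  qed
  have Pe: "range A = UNIV \<longrightarrow> ((\<exists>y. h y = (INF z. h z)) \<longleftrightarrow> xs \<in> Im_subdiff f)"
  proof
    assume H: "range A = UNIV"
    show "(\<exists>y. h y = (INF z. h z)) \<longleftrightarrow> xs \<in> Im_subdiff f" by (rule part_e[OF ctx H])
  qed
  show ?thesis
    by (intro conjI; (rule Pa Pa2 Pb1 Pb2 Pb3 Pc1 Pc2 Pd1 Pd2 Pe)?)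
qed

end
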